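(* If the microstructure is a periodic dispersion of inclusions or a layered material, then for $i=1,2$ $$\sup_{\epsilon>0}\int_\Omega\chi_i^\epsilon(x)\big|P_\epsilon(x,M_\epsilon\nabla u(x))\big|^{p_i}dx\le C<\infty.$$
   Context: Standing setup. $Y=(0,1)^n$, $\Omega\subset\mathbb R^n$ bounded open; $\chi_1$ a $Y$-periodic indicator, $\chi_2=1-\chi_1$; $0<\sigma_1,\sigma_2<\infty$; $1<p_1\le p_2\le2$ or $1<p_1\le2\le p_2$; $q_2=p_1/(p_1-1)$. $A(y,\xi)=\sigma(y)|\xi|^{p(y)-2}\xi$ with $\sigma=\chi_1\sigma_1+\chi_2\sigma_2$, $p=\chi_1p_1+\chi_2p_2$. $W^{1,p}_{per}(Y)$: mean-zero $W^{1,p}(Y)$ functions with equal traces on opposite faces. $v_\xi\in W^{1,p_1}_{per}(Y)$ solves $\int_Y(A(y,\xi+\nabla v_\xi),\nabla w)dy=0$ for all $w$; $P(y,\xi)=\xi+\nabla v_\xi(y)$ ($Y$-periodic), $P_\epsilon(x,\xi)=P(x/\epsilon,\xi)$; $b(\xi)=\int_YA(y,P(y,\xi))dy$; $\chi_i^\epsilon(x)=\chi_i(x/\epsilon)$. Given $f\in W^{-1,q_2}(\Omega)$, $u\in W^{1,p_1}_0(\Omega)$ is the weak solution of $-\operatorname{div}b(\nabla u)=f$. Dispersed: $\chi_1$ is the periodic extension of the indicator of an open simply connected smooth $F$ with $\overline F\subset Y$; layered: $\chi_1(y)=1$ iff $a<y_1<b$ (mod 1), $0<a<b<1$. For these microstructures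 it is known that $u\in W^{1,p_2}_0(\Omega)$. $M_\epsilon$: with $Y^k_\epsilon=\epsilon k+(0,\epsilon)^n$, $I_\epsilon=\{k:Y^k_\epsilon\subset\Omega\}$, $M_\epsilon\varphi$ is the average of $\varphi$ over $Y^k_\epsilon$ on $Y^k_\epsilon$ ($k\in I_\epsilon$) and $0$ elsewhere. *)

theory Defs
  imports "HOL-Analysis.Analysis"
begin

type_synonym 'n pt = "real ^ 'n"

fun Ck_on :: "nat \<Rightarrow> ('n::finite) pt set \<Rightarrow> ('n pt \<Rightarrow> real) \<Rightarrow> bool" where
  "Ck_on 0 S f = continuous_on S f"
| "Ck_on (Suc k) S f =
     (continuous_on S f \<and>
      (\<exists>G. (\<forall>x\<in>S. (f has_derivative (\<lambda>h. G x \<bullet> h)) (at x)) \<and>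
           (\<forall>j. Ck_on k S (\<lambda>x. G x $ j))))"

definition smooth_on :: "('n::finite) pt set \<Rightarrow> ('n pt \<Rightarrow> real) \<Rightarrow> bool" where
  "smooth_on S f \<longleftrightarrow> (\<forall>k. Ck_on k S f)"

definition grad :: "(('n::finite) pt \<Rightarrow> real) \<Rightarrow> 'n pt \<Rightarrow> 'n pt" where
  "grad f x = (\<chi> j. frechet_derivative f (at x) (axis j 1))"

definition test_fun :: "('n::finite) pt set \<Rightarrow> ('n pt \<Rightarrow> real) \<Rightarrow> bool" where
  "test_fun U \<phi> \<longleftrightarrow> smooth_on UNIV \<phi> \<and> compact (closure {x. \<phi> x \<noteq> 0})
      \<and> closure {x. \<phi> x \<noteq> 0} \<subseteq> U"

definition loc_int :: "('n::finite) pt set \<Rightarrow> ('n pt \<Rightarrow> 'b::{banach,second_countable_topology}) \<Rightarrow> bool" where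
  "loc_int U f \<longleftrightarrow> (\<forall>K. compact K \<and> K \<subseteq> U \<longrightarrow> set_integrable lebesgue K f)"

definition weak_grad :: "('n::finite) pt set \<Rightarrow> ('n pt \<Rightarrow> real) \<Rightarrow> ('n pt \<Rightarrow> 'n pt) \<Rightarrow> bool" where
  "weak_grad U f g \<longleftrightarrow> loc_int U f \<and> loc_int U g \<and>
     (\<forall>\<phi>. test_fun U \<phi> \<longrightarrow> (\<forall>j.
        (LINT x:U|lebesgue. f x * grad \<phi> x $ j) = - (LINT x:U|lebesgue. g x $ j * \<phi> x)))"

definition Lp :: "real \<Rightarrow> ('n::finite) pt set \<Rightarrow> ('n pt \<Rightarrow> 'b::{banach,second_countable_topology}) \<Rightarrow> bool" where
  "Lp p U f \<longleftrightarrow> set_borel_measurable lebesgue U f \<and>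
     set_integrable lebesgue U (\<lambda>x. norm (f x) powr p)"

definition W1p :: "real \<Rightarrow> ('n::finite) pt set \<Rightarrow> ('n pt \<Rightarrow> real) \<Rightarrow> ('n pt \<Rightarrow> 'n pt) \<Rightarrow> bool" where
  "W1p p U f g \<longleftrightarrow> weak_grad U f g \<and> Lp p U f \<and> Lp p U g"

definition W1p0 :: "real \<Rightarrow> ('n::finite) pt set \<Rightarrow> ('n pt \<Rightarrow> real) \<Rightarrow> ('n pt \<Rightarrow> 'n pt) \<Rightarrow> bool" where
  "W1p0 p U f g \<longleftrightarrow> W1p p U f g \<and>
     (\<exists>\<phi>. (\<forall>m. test_fun U (\<phi> m)) \<and>
        ((\<lambda>m. LINT x:U|lebesgue. \<bar>\<phi> m x - f x\<bar> powr p) \<longlonglongrightarrow> 0) \<and>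
        ((\<lambda>m. LINT x:U|lebesgue. norm (grad (\<phi> m) x - g x) powr p) \<longlonglongrightarrow> 0))"

definition W1p_norm :: "real \<Rightarrow> ('n::finite) pt set \<Rightarrow> ('n pt \<Rightarrow> real) \<Rightarrow> ('n pt \<Rightarrow> 'n pt) \<Rightarrow> real" where
  "W1p_norm p U f g = (LINT x:U|lebesgue. \<bar>f x\<bar> powr p) powr (1/p)
                     + (LINT x:U|lebesgue. norm (g x) powr p) powr (1/p)"

definition Ycell :: "('n::finite) pt set" where
  "Ycell = {y. \<forall>i. 0 < y $ i \<and> y $ i < 1}"

definition intvec :: "('n::finite \<Rightarrow> int) \<Rightarrow> 'n pt" where
  "intvec k = (\<chi> i. of_int (k i))"

definition Y_periodic :: "(('n::finite) pt \<Rightarrow> 'b) \<Rightarrow> bool" where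
  "Y_periodic f \<longleftrightarrow> (\<forall>x j. f (x + axis j 1) = f x)"

text \<open>phase 1 is the set E (chi_1 = indicator E), phase 2 its complement\<close>
definition pexp :: "('n::finite) pt set \<Rightarrow> real \<Rightarrow> real \<Rightarrow> 'n pt \<Rightarrow> real" where
  "pexp E p1 p2 y = (if y \<in> E then p1 else p2)"

definition sig :: "('n::finite) pt set \<Rightarrow> real \<Rightarrow> real \<Rightarrow> 'n pt \<Rightarrow> real" where
  "sig E s1 s2 y = (if y \<in> E then s1 else s2)"

definition Aop :: "('n::finite) pt set \<Rightarrow> real \<Rightarrow> real \<Rightarrow> real \<Rightarrow> real \<Rightarrow> 'n pt \<Rightarrow> 'n pt \<Rightarrow> 'n pt" where
  "Aop E s1 s2 p1 p2 y \<xi> = (sig E s1 s2 y * norm \<xi> powr (pexp E p1 p2 y - 2)) *\<^sub>R \<xi>"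

definition per_space :: "('n::finite) pt set \<Rightarrow> real \<Rightarrow> real \<Rightarrow> ('n pt \<Rightarrow> real) \<Rightarrow> ('n pt \<Rightarrow> 'n pt) \<Rightarrow> bool" where
  "per_space E p1 p2 w Dw \<longleftrightarrow> Y_periodic w \<and> weak_grad UNIV w Dw \<and>
     W1p p1 Ycell w Dw \<and> (LINT y:Ycell|lebesgue. w y) = 0 \<and>
     set_integrable lebesgue Ycell (\<lambda>y. norm (Dw y) powr pexp E p1 p2 y)"

definition cell_solutions :: "('n::finite) pt set \<Rightarrow> real \<Rightarrow> real \<Rightarrow> real \<Rightarrow> real
     \<Rightarrow> ('n pt \<Rightarrow> 'n pt \<Rightarrow> real) \<Rightarrow> ('n pt \<Rightarrow> 'n pt \<Rightarrow> 'n pt) \<Rightarrow> bool" where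
  "cell_solutions E s1 s2 p1 p2 v Dv \<longleftrightarrow> (\<forall>\<xi>. per_space E p1 p2 (v \<xi>) (Dv \<xi>) \<and>
     (\<forall>w Dw. per_space E p1 p2 w Dw \<longrightarrow>
        (LINT y:Ycell|lebesgue. Aop E s1 s2 p1 p2 y (\<xi> + Dv \<xi> y) \<bullet> Dw y) = 0))"

definition bhom :: "('n::finite) pt set \<Rightarrow> real \<Rightarrow> real \<Rightarrow> real \<Rightarrow> real
     \<Rightarrow> ('n pt \<Rightarrow> 'n pt \<Rightarrow> 'n pt) \<Rightarrow> 'n pt \<Rightarrow> 'n pt" where
  "bhom E s1 s2 p1 p2 Dv \<xi> = (LINT y:Ycell|lebesgue. Aop E s1 s2 p1 p2 y (\<xi> + Dv \<xi> y))"

definition smooth_boundary :: "('n::finite) pt set \<Rightarrow> bool" where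
  "smooth_boundary F \<longleftrightarrow> (\<forall>z\<in>frontier F. \<exists>r>0. \<exists>\<phi>. smooth_on UNIV \<phi> \<and> grad \<phi> z \<noteq> 0 \<and>
      F \<inter> ball z r = {x \<in> ball z r. \<phi> x < 0})"

definition dispersed :: "('n::finite) pt set \<Rightarrow> bool" where
  "dispersed E \<longleftrightarrow> (\<exists>F. open F \<and> simply_connected F \<and> smooth_boundary F \<and>
      closure F \<subseteq> Ycell \<and> E = (\<Union>k. (\<lambda>y. y + intvec k) ` F))"

text \<open>layered in the direction of coordinate i0 (the paper uses i0 = 1)\<close>
definition layered :: "('n::finite) pt set \<Rightarrow> bool" where
  "layered E \<longleftrightarrow> (\<exists>(i0::'n) a b. 0 < a \<and> a < b \<and> b < 1 \<and>
      E = {y. a < frac (y $ i0) \<and> frac (y $ i0) < b})"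

definition eps_cell :: "real \<Rightarrow> (('n::finite) \<Rightarrow> int) \<Rightarrow> 'n pt set" where
  "eps_cell \<epsilon> k = {x. \<forall>i. \<epsilon> * of_int (k i) < x $ i \<and> x $ i < \<epsilon> * (of_int (k i) + 1)}"

definition Mavg :: "('n::finite) pt set \<Rightarrow> real \<Rightarrow> ('n pt \<Rightarrow> 'n pt) \<Rightarrow> 'n pt \<Rightarrow> 'n pt" where
  "Mavg \<Omega> \<epsilon> g x =
     (if \<exists>k. eps_cell \<epsilon> k \<subseteq> \<Omega> \<and> x \<in> eps_cell \<epsilon> k
      then (let k = (SOME k. eps_cell \<epsilon> k \<subseteq> \<Omega> \<and> x \<in> eps_cell \<epsilon> k)
            in (1 / \<epsilon> ^ CARD('n)) *\<^sub>R (LINT y:eps_cell \<epsilon> k|lebesgue. g y))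
      else 0)"

end

theory Submission
  imports Defs "HOL-Computational_Algebra.Polynomial"
begin

fun Ck1 :: "nat \<Rightarrow> (real \<Rightarrow> real) \<Rightarrow> bool" where
  "Ck1 0 h = continuous_on UNIV h"
| "Ck1 (Suc k) h = (continuous_on UNIV h \<and>
     (\<exists>h'. (\<forall>t. (h has_real_derivative h' t) (at t)) \<and> Ck1 k h'))"

lemma Ck1_cont: "Ck1 k h \<Longrightarrow> continuous_on UNIV h"
  by (cases k) auto

lemma Ck1_mono: "Ck1 (Suc k) h \<Longrightarrow> Ck1 k h"
proof (induction k arbitrary: h)
  case 0 then show ?case by simp
next
  case (Suc k)
  then obtain h' where "\<forall>t. (h has_real_derivative h' t) (at t)" "Ck1 (Suc k) h'" "continuous_on UNIV h" by auto
  with Suc.IH show ?case by auto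
qed

lemma Ck1_const: "Ck1 k (\<lambda>t. c)"
proof (induction k arbitrary: c)
  case 0 then show ?case by simp
next
  case (Suc k)
  have "\<forall>t. ((\<lambda>t. c) has_real_derivative (\<lambda>t. 0) t) (at t)" by (auto intro!: derivative_eq_intros)
  with Suc show ?case by (auto intro!: exI[of _ "\<lambda>t. 0"])
qed

lemma Ck1_add: "Ck1 k f \<Longrightarrow> Ck1 k g \<Longrightarrow> Ck1 k (\<lambda>t. f t + g t)"
proof (induction k arbitrary: f g)
  case 0 then show ?case by (auto intro!: continuous_intros)
next
  case (Suc k)
  from Suc.prems obtain f' g' where f': "\<forall>t. (f has_real_derivative f' t) (at t)" "Ck1 k f'"
     and g': "\<forall>t. (g has_real_derivative g' t) (at t)" "Ck1 k g'"
     and c: "continuous_on UNIV f" "continuous_on UNIV g" by auto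
  have "\<forall>t. ((\<lambda>t. f t + g t) has_real_derivative (f' t + g' t)) (at t)"
    using f' g' by (auto intro!: derivative_eq_intros)
  with Suc.IH[OF f'(2) g'(2)] c show ?case by (auto intro!: continuous_intros exI[of _ "\<lambda>t. f' t + g' t"])
qed

lemma Ck1_mult: "Ck1 k f \<Longrightarrow> Ck1 k g \<Longrightarrow> Ck1 k (\<lambda>t. f t * g t)"
proof (induction k arbitrary: f g)
  case 0 then show ?case by (auto intro!: continuous_intros)
next
  case (Suc k)
  from Suc.prems obtain f' g' where f': "\<forall>t. (f has_real_derivative f' t) (at t)" "Ck1 k f'"
     and g': "\<forall>t. (g has_real_derivative g' t) (at t)" "Ck1 k g'"
     and c: "continuous_on UNIV f" "continuous_on UNIV g" by auto
  have "\<forall>t. ((\<lambda>t. f t * g t) has_real_derivative (f' t * g t + f t * g' t)) (at t)"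
    using f' g' by (auto intro!: derivative_eq_intros)
  moreover have "Ck1 k (\<lambda>t. f' t * g t + f t * g' t)"
    using Suc.IH[OF f'(2) Ck1_mono[OF Suc.prems(2)]] Suc.IH[OF Ck1_mono[OF Suc.prems(1)] g'(2)]
    by (rule Ck1_add)
  ultimately show ?case using c by (auto intro!: continuous_intros)
qed

lemma Ck1_affine: "Ck1 k h \<Longrightarrow> Ck1 k (\<lambda>t. h (c * t + d))"
proof (induction k arbitrary: h)
  case 0 then show ?case
    by (auto intro!: continuous_on_compose2[of UNIV h] continuous_intros)
next
  case (Suc k)
  from Suc.prems obtain h' where h': "\<forall>t. (h has_real_derivative h' t) (at t)" "Ck1 k h'"
     and c: "continuous_on UNIV h" by auto
  have "\<forall>t. ((\<lambda>t. h (c * t + d)) has_real_derivative (h' (c * t + d) * c)) (at t)"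
    using h' by (auto intro!: derivative_eq_intros DERIV_chain2[of h])
  moreover have "Ck1 k (\<lambda>t. h' (c * t + d) * c)"
    by (rule Ck1_mult[OF Suc.IH[OF h'(2)] Ck1_const])
  moreover have "continuous_on UNIV (\<lambda>t. h (c * t + d))"
    using c by (auto intro!: continuous_on_compose2[of UNIV h] continuous_intros)
  ultimately show ?case by auto
qed

lemma poly_exp_lim: "((\<lambda>s. s ^ m * poly p s * exp (- s)) \<longlongrightarrow> (0::real)) at_top"
proof (induction p arbitrary: m)
  case 0 then show ?case by simp
next
  case (pCons a p)
  have e: "s ^ m * poly (pCons a p) s * exp (- s) = a * (s ^ m / exp s) + s ^ Suc m * poly p s * exp (- s)" for s
    by (simp add: exp_minus field_simps)
  have "((\<lambda>s. a * (s ^ m / exp s) + s ^ Suc m * poly p s * exp (- s)) \<longlongrightarrow> a * 0 + 0) at_top"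
    by (intro tendsto_intros tendsto_power_div_exp_0 pCons.IH)
  then show ?case unfolding e by simp
qed

definition psi :: "real poly \<Rightarrow> real \<Rightarrow> real" where
  "psi p t = (if t > 0 then poly p (1/t) * exp (- (1/t)) else 0)"

definition psiD :: "real poly \<Rightarrow> real poly" where
  "psiD p = monom 1 2 * (p - pderiv p)"

lemma psi_right_lim: "((\<lambda>t. psi p t / t) \<longlongrightarrow> 0) (at_right 0)"
proof -
  have "((\<lambda>s. s ^ 1 * poly p s * exp (- s)) \<longlongrightarrow> (0::real)) at_top" by (rule poly_exp_lim)
  from filterlim_compose[OF this filterlim_inverse_at_top_right]
  have "((\<lambda>t. inverse t ^ 1 * poly p (inverse t) * exp (- inverse t)) \<longlongrightarrow> 0) (at_right (0::real))" .
  moreover have "eventually (\<lambda>t. inverse t ^ 1 * poly p (inverse t) * exp (- inverse t) = psi p t / t) (at_right (0::real))"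
    unfolding eventually_at_right_field by (auto simp: psi_def field_simps intro!: exI[of _ 1])
  ultimately show ?thesis by (rule Lim_transform_eventually)
qed

lemma psi_deriv0: "(psi p has_real_derivative 0) (at 0)"
  unfolding has_field_derivative_iff
proof (subst filterlim_at_split, rule conjI)
  show "((\<lambda>y. (psi p y - psi p 0) / (y - 0)) \<longlongrightarrow> 0) (at_left 0)"
  proof (rule Lim_transform_eventually[OF tendsto_const])
    show "eventually (\<lambda>y. 0 = (psi p y - psi p 0) / (y - 0)) (at_left (0::real))"
      unfolding eventually_at_left_field by (auto simp: psi_def intro!: exI[of _ "-1"])
  qed
  show "((\<lambda>y. (psi p y - psi p 0) / (y - 0)) \<longlongrightarrow> 0) (at_right 0)"
    using psi_right_lim[of p] by (simp add: psi_def)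
qed

lemma psi_deriv_pos:
  assumes t: "t > 0"
  shows "(psi p has_real_derivative psi (psiD p) t) (at t)"
proof -
  have "((\<lambda>t. poly p (1/t) * exp (- (1/t))) has_real_derivative
        (poly (pderiv p) (1/t) * (- inverse (t^2)) * exp (- (1/t)) + poly p (1/t) * (exp (- (1/t)) * inverse (t^2)))) (at t)"
    using t by (auto intro!: derivative_eq_intros DERIV_chain2[OF poly_DERIV] simp: power2_eq_square field_simps)
  also have "(poly (pderiv p) (1/t) * (- inverse (t^2)) * exp (- (1/t)) + poly p (1/t) * (exp (- (1/t)) * inverse (t^2)))
       = psi (psiD p) t"
    using t by (simp add: psi_def psiD_def poly_monom field_simps power2_eq_square)
  finally have d: "((\<lambda>t. poly p (1/t) * exp (- (1/t))) has_real_derivative psi (psiD p) t) (at t)" .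
  show ?thesis
    by (rule has_field_derivative_transform_within_open[OF d, of "{0<..}"]) (use t in \<open>auto simp: psi_def\<close>)
qed

lemma psi_deriv_neg:
  assumes t: "t < 0"
  shows "(psi p has_real_derivative 0) (at t)"
proof -
  have d: "((\<lambda>t. 0) has_real_derivative 0) (at t)" by simp
  show ?thesis
    by (rule has_field_derivative_transform_within_open[OF d, of "{..<0}"]) (use t in \<open>auto simp: psi_def\<close>)
qed

lemma psi_deriv: "(psi p has_real_derivative psi (psiD p) t) (at t)"
proof -
  consider "t > 0" | "t = 0" | "t < 0" by linarith
  then show ?thesis
  proof cases
    case 1 then show ?thesis by (rule psi_deriv_pos)
  next
    case 2 then show ?thesis using psi_deriv0[of p] by (simp add: psi_def)
  next
    case 3 then show ?thesis using psi_deriv_neg[of t p] by (simp add: psi_def)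
  qed
qed

lemma psi_cont: "continuous_on UNIV (psi p)"
  using psi_deriv by (meson DERIV_isCont continuous_at_imp_continuous_on)

lemma Ck1_psi: "Ck1 k (psi p)"
proof (induction k arbitrary: p)
  case 0 then show ?case using psi_cont by simp
next
  case (Suc k)
  then show ?case using psi_cont psi_deriv by (auto intro!: exI[of _ "psi (psiD p)"])
qed

definition psi1 :: "real \<Rightarrow> real" where "psi1 = psi 1"

lemma psi1_eq: "psi1 t = (if t > 0 then exp (- (1/t)) else 0)"
  by (simp add: psi1_def psi_def)

lemma Ck1_psi1: "Ck1 k psi1" unfolding psi1_def by (rule Ck1_psi)

lemma psi1_nonneg: "0 \<le> psi1 t" and psi1_le1: "psi1 t \<le> 1"
  by (auto simp: psi1_eq)

lemma Ckn_cont: "Ck_on k S f \<Longrightarrow> continuous_on S f"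
  by (cases k) auto

lemma Ckn_mono: "Ck_on (Suc k) UNIV f \<Longrightarrow> Ck_on k UNIV f"
proof (induction k arbitrary: f)
  case 0 then show ?case by simp
next
  case (Suc k)
  then obtain G where "\<forall>x. (f has_derivative (\<lambda>h. G x \<bullet> h)) (at x)" "\<forall>j. Ck_on (Suc k) UNIV (\<lambda>x. G x $ j)"
    "continuous_on UNIV f" by auto
  with Suc.IH show ?case by auto
qed

lemma Ckn_const: "Ck_on k UNIV (\<lambda>x. c)"
proof (induction k arbitrary: c)
  case 0 then show ?case by simp
next
  case (Suc k)
  have "\<forall>x. ((\<lambda>x::'a pt. c) has_derivative (\<lambda>h. (0::'a pt) \<bullet> h)) (at x)"
  proof
    fix x
    have eq: "((\<bullet>) (0::'a pt)) = (\<lambda>h. 0)" by (rule ext) simp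
    show "((\<lambda>x::'a pt. c) has_derivative (\<lambda>h. (0::'a pt) \<bullet> h)) (at x)"
      by (simp add: eq)
  qed
  then have "\<exists>G. (\<forall>x\<in>UNIV. ((\<lambda>x::'a pt. c) has_derivative (\<lambda>h. G x \<bullet> h)) (at x)) \<and>
           (\<forall>j. Ck_on k UNIV (\<lambda>x. G x $ j))"
    using Suc by (intro exI[of _ "\<lambda>x. 0"]) simp
  then show ?case by simp
qed

lemma Ckn_add: "Ck_on k UNIV f \<Longrightarrow> Ck_on k UNIV g \<Longrightarrow> Ck_on k UNIV (\<lambda>x. f x + g x)"
proof (induction k arbitrary: f g)
  case 0 then show ?case by (auto intro!: continuous_intros)
next
  case (Suc k)
  from Suc.prems obtain F G where F: "\<forall>x. (f has_derivative (\<lambda>h. F x \<bullet> h)) (at x)" "\<forall>j. Ck_on k UNIV (\<lambda>x. F x $ j)"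
     and G: "\<forall>x. (g has_derivative (\<lambda>h. G x \<bullet> h)) (at x)" "\<forall>j. Ck_on k UNIV (\<lambda>x. G x $ j)"
     and c: "continuous_on UNIV f" "continuous_on UNIV g" by auto
  have "\<forall>x. ((\<lambda>x. f x + g x) has_derivative (\<lambda>h. (F x + G x) \<bullet> h)) (at x)"
    using F G by (auto intro!: derivative_eq_intros simp: inner_add_left)
  moreover have "\<forall>j. Ck_on k UNIV (\<lambda>x. (F x + G x) $ j)"
    using Suc.IH F G by auto
  ultimately show ?case using c by (auto intro!: continuous_intros)
qed

lemma Ckn_mult: "Ck_on k UNIV f \<Longrightarrow> Ck_on k UNIV g \<Longrightarrow> Ck_on k UNIV (\<lambda>x. f x * g x)"
proof (induction k arbitrary: f g)
  case 0 then show ?case by (auto intro!: continuous_intros)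
next
  case (Suc k)
  from Suc.prems obtain F G where F: "\<forall>x. (f has_derivative (\<lambda>h. F x \<bullet> h)) (at x)" "\<forall>j. Ck_on k UNIV (\<lambda>x. F x $ j)"
     and G: "\<forall>x. (g has_derivative (\<lambda>h. G x \<bullet> h)) (at x)" "\<forall>j. Ck_on k UNIV (\<lambda>x. G x $ j)"
     and c: "continuous_on UNIV f" "continuous_on UNIV g" by auto
  have "\<forall>x. ((\<lambda>x. f x * g x) has_derivative (\<lambda>h. (f x *\<^sub>R G x + g x *\<^sub>R F x) \<bullet> h)) (at x)"
    using F G by (auto intro!: derivative_eq_intros simp: inner_add_left algebra_simps)
  moreover have "\<forall>j. Ck_on k UNIV (\<lambda>x. (f x *\<^sub>R G x + g x *\<^sub>R F x) $ j)"
  proof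
    fix j
    have "Ck_on k UNIV (\<lambda>x. f x * G x $ j + g x * F x $ j)"
      using Suc.IH[OF Ckn_mono[OF Suc.prems(1)]] Suc.IH[OF Ckn_mono[OF Suc.prems(2)]] F G
      by (intro Ckn_add) auto
    then show "Ck_on k UNIV (\<lambda>x. (f x *\<^sub>R G x + g x *\<^sub>R F x) $ j)" by simp
  qed
  ultimately show ?case using c by (auto intro!: continuous_intros)
qed

lemma Ckn_prod: "finite A \<Longrightarrow> (\<And>i. i \<in> A \<Longrightarrow> Ck_on k UNIV (f i)) \<Longrightarrow> Ck_on k UNIV (\<lambda>x. \<Prod>i\<in>A. f i x)"
proof (induction A rule: finite_induct)
  case empty then show ?case by (simp add: Ckn_const)
next
  case (insert a A)
  then show ?case by (simp add: Ckn_mult)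
qed

lemma Ckn_coord: "Ck1 k h \<Longrightarrow> Ck_on k UNIV (\<lambda>x::'n::finite pt. h (x $ i))"
proof (induction k arbitrary: h)
  case 0 then show ?case
    by (auto intro!: continuous_on_compose2[of UNIV h] continuous_intros)
next
  case (Suc k)
  from Suc.prems obtain h' where h': "\<forall>t. (h has_real_derivative h' t) (at t)" "Ck1 k h'"
     and c: "continuous_on UNIV h" by auto
  have "((\<lambda>x::'n pt. h (x $ i)) has_derivative (\<lambda>v. (h' (x $ i) *\<^sub>R axis i 1) \<bullet> v)) (at x)" for x
  proof -
    have "((\<lambda>x::'n pt. h (x $ i)) has_derivative (\<lambda>v. h' (x $ i) * (v $ i))) (at x)"
      using h' has_derivative_compose[OF bounded_linear_imp_has_derivative[OF bounded_linear_vec_nth[of i]], of h "\<lambda>v. h' (x $ i) * v" x UNIV]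
      by (metis has_field_derivative_def mult.commute)
    then show ?thesis by (simp add: inner_axis' mult.commute)
  qed
  moreover have "Ck_on k UNIV (\<lambda>x::'n pt. (h' (x $ i) *\<^sub>R axis i 1) $ j)" for j
  proof -
    have "Ck_on k UNIV (\<lambda>x::'n pt. h' (x $ i) * (axis i 1 :: 'n pt) $ j)"
      by (intro Ckn_mult Suc.IH h' Ckn_const)
    then show ?thesis by simp
  qed
  moreover have "continuous_on UNIV (\<lambda>x::'n pt. h (x $ i))"
    using c by (auto intro!: continuous_on_compose2[of UNIV h] continuous_intros)
  moreover have "\<And>c. ((\<bullet>) (c *\<^sub>R axis i 1)) = (\<lambda>v::'n pt. c * (axis i 1 \<bullet> v))"
    by (rule ext) simp
  ultimately show ?case by (auto intro!: exI[of _ "\<lambda>x. h' (x $ i) *\<^sub>R axis i 1"])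
qed

definition bump :: "real \<Rightarrow> ('n::finite) pt \<Rightarrow> 'n pt \<Rightarrow> 'n pt \<Rightarrow> real" where
  "bump m a b x = (\<Prod>i\<in>UNIV. psi1 (m * (x $ i) + (- m * a $ i)) * psi1 ((- m) * (x $ i) + m * b $ i))"

lemma bump_smooth: "smooth_on UNIV (bump m a b)"
  unfolding smooth_on_def
proof
  fix k
  show "Ck_on k UNIV (bump m a b)"
    unfolding bump_def[abs_def]
    by (intro Ckn_prod Ckn_mult Ckn_coord[where h="\<lambda>t. psi1 (_ * t + _)"] Ck1_affine Ck1_psi1) auto
qed

lemma psi1_pos: "psi1 s \<noteq> 0 \<Longrightarrow> s > 0"
  by (auto simp: psi1_eq split: if_splits)

lemma bump_nz: "m > 0 \<Longrightarrow> bump m a b x \<noteq> 0 \<Longrightarrow> x \<in> box a b"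
proof -
  assume m: "m > 0" and nz: "bump m a b x \<noteq> 0"
  have "\<forall>i. psi1 (m * (x $ i) + (- m * a $ i)) \<noteq> 0 \<and> psi1 ((- m) * (x $ i) + m * b $ i) \<noteq> 0"
    using nz unfolding bump_def by auto
  then have "\<forall>i. m * (x $ i) + (- m * a $ i) > 0 \<and> (- m) * (x $ i) + m * b $ i > 0"
    using psi1_pos by blast
  then have "\<forall>i. m * (x $ i - a $ i) > 0 \<and> m * (b $ i - x $ i) > 0"
    by (simp add: algebra_simps)
  then show ?thesis using m by (auto simp: mem_box_cart zero_less_mult_iff)
qed

lemma bump_supp: "m > 0 \<Longrightarrow> closure {x. bump m a b x \<noteq> 0} \<subseteq> cbox a b"
  by (rule closure_minimal) (use bump_nz box_subset_cbox in blast)+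

lemma bump_test: "m > 0 \<Longrightarrow> test_fun UNIV (bump m a b)"
  unfolding test_fun_def using bump_smooth bump_supp
  by (metis closed_closure compact_Int_closed compact_cbox inf.absorb_iff2 subset_UNIV)

lemma bump_nonneg: "0 \<le> bump m a b x"
  unfolding bump_def by (intro prod_nonneg mult_nonneg_nonneg psi1_nonneg) 

lemma bump_le1: "bump m a b x \<le> 1"
  unfolding bump_def by (intro prod_le_1 conjI mult_nonneg_nonneg psi1_nonneg mult_le_one psi1_le1)

lemma bump_cont: "continuous_on UNIV (bump m a b)"
  using bump_smooth unfolding smooth_on_def by (metis Ck_on.simps(1))

lemma bump_bound: "m > 0 \<Longrightarrow> \<bar>bump m a b x\<bar> \<le> indicator (cbox a b) x"
  using bump_nonneg[of m a b x] bump_le1[of m a b x] bump_nz[of m a b x] box_subset_cbox[of a b]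
  by (auto simp: indicator_def)

lemma psi1_lim: "s > 0 \<Longrightarrow> (\<lambda>n. psi1 (real (Suc n) * s)) \<longlonglongrightarrow> 1"
proof -
  assume s: "s > 0"
  have "(\<lambda>n. exp (- (inverse s * inverse (real (Suc n))))) \<longlonglongrightarrow> exp (- (inverse s * 0))"
    by (intro tendsto_intros LIMSEQ_inverse_real_of_nat)
  moreover have "psi1 (real (Suc n) * s) = exp (- (inverse s * inverse (real (Suc n))))" for n
    using s by (simp add: psi1_eq field_simps add_pos_nonneg)
  ultimately show ?thesis by simp
qed

lemma bump_lim: "(\<lambda>n. bump (real (Suc n)) a b x) \<longlonglongrightarrow> indicator (box a b) x"
proof (cases "x \<in> box a b")
  case True
  then have xi: "\<And>i. a $ i < x $ i \<and> x $ i < b $ i" by (auto simp: mem_box_cart)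
  have "(\<lambda>n. \<Prod>i\<in>UNIV. psi1 (real (Suc n) * (x $ i - a $ i)) * psi1 (real (Suc n) * (b $ i - x $ i)))
        \<longlonglongrightarrow> (\<Prod>i\<in>(UNIV::'a set). 1 * 1)"
    using xi by (intro tendsto_prod tendsto_mult psi1_lim) auto
  moreover have "bump (real (Suc n)) a b x = (\<Prod>i\<in>UNIV. psi1 (real (Suc n) * (x $ i - a $ i)) * psi1 (real (Suc n) * (b $ i - x $ i)))" for n
    unfolding bump_def by (simp add: algebra_simps)
  ultimately show ?thesis using True by simp
next
  case False
  then have "bump (real (Suc n)) a b x = 0" for n using bump_nz[of "real (Suc n)" a b x] by auto
  then show ?thesis using False by simp
qed

lemma bump_shift: "bump m a b (x + e) = bump m (a - e) (b - e) x"
  unfolding bump_def by (simp add: algebra_simps)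

lemma grad_shift:
  assumes "(\<phi> has_derivative D) (at (x + e))"
  shows "grad (\<lambda>x. \<phi> (x + e)) x = grad \<phi> (x + e)"
proof -
  have "((\<lambda>x. \<phi> (x + e)) has_derivative D) (at x)"
  proof -
    have "((\<lambda>x. x + e) has_derivative (\<lambda>h. h)) (at x)" by (auto intro!: derivative_eq_intros)
    then show ?thesis using has_derivative_compose[of "\<lambda>x. x + e" "\<lambda>h. h" x UNIV \<phi> D] assms by simp
  qed
  then show ?thesis using assms unfolding grad_def by (metis frechet_derivative_at)
qed

lemma bump_diff: "\<exists>D. (bump m a b has_derivative D) (at x)"
proof -
  have "Ck_on 1 UNIV (bump m a b)" using bump_smooth unfolding smooth_on_def by blast
  then show ?thesis by auto
qed

lemma box_zero_ae_lborel:
  fixes h :: "'a::euclidean_space \<Rightarrow> real"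
  assumes hm[measurable]: "h \<in> borel_measurable lborel" and hi: "integrable lborel h"
    and z: "\<And>a b. (\<integral>x. indicator (box a b) x * h x \<partial>lborel) = 0"
  shows "AE x in lborel. h x = 0"
proof -
  let ?P = "\<lambda>x. ennreal (h x)" and ?N = "\<lambda>x. ennreal (- h x)"
  have fin: "(\<integral>\<^sup>+x. ennreal (norm (h x)) \<partial>lborel) < \<infinity>" using hi by (simp add: integrable_iff_bounded)
  have eqbox: "emeasure (density lborel ?P) X = emeasure (density lborel ?N) X"
    if "X \<in> range (\<lambda>(a, b). box a b)" for X
  proof -
    from that obtain p where p: "X = (case p of (a, b) \<Rightarrow> box a b)" by auto
    obtain a b where X: "X = box a b" using p by (cases p) auto
    have ii: "integrable lborel (\<lambda>x. indicator X x * h x)"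
      using integrable_real_mult_indicator[of X lborel h] hi X by (simp add: mult.commute)
    have "(\<integral>x. indicator X x * h x \<partial>lborel) = 0" using z X by simp
    then have e: "enn2real (\<integral>\<^sup>+x. ennreal (indicator X x * h x) \<partial>lborel) = enn2real (\<integral>\<^sup>+x. ennreal (- (indicator X x * h x)) \<partial>lborel)"
      using real_lebesgue_integral_def[OF ii] by simp
    have f1: "(\<integral>\<^sup>+x. ennreal (indicator X x * h x) \<partial>lborel) < \<infinity>"
      by (rule le_less_trans[OF nn_integral_mono fin]) (auto simp: indicator_def)
    have f2: "(\<integral>\<^sup>+x. ennreal (- (indicator X x * h x)) \<partial>lborel) < \<infinity>"
      by (rule le_less_trans[OF nn_integral_mono fin]) (auto simp: indicator_def)
    have "(\<integral>\<^sup>+x. ennreal (indicator X x * h x) \<partial>lborel) = (\<integral>\<^sup>+x. ennreal (- (indicator X x * h x)) \<partial>lborel)"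
    proof -
      have "ennreal (enn2real (\<integral>\<^sup>+x. ennreal (indicator X x * h x) \<partial>lborel)) = ennreal (enn2real (\<integral>\<^sup>+x. ennreal (- (indicator X x * h x)) \<partial>lborel))"
        using e by simp
      then show ?thesis using f1 f2 by (subst (asm) (1 2) ennreal_enn2real) auto
    qed
    moreover have "emeasure (density lborel ?P) X = (\<integral>\<^sup>+x. ennreal (indicator X x * h x) \<partial>lborel)"
      using X by (simp add: emeasure_density) (intro nn_integral_cong, auto simp: indicator_def)
    moreover have "emeasure (density lborel ?N) X = (\<integral>\<^sup>+x. ennreal (- (indicator X x * h x)) \<partial>lborel)"
      using X by (simp add: emeasure_density) (intro nn_integral_cong, auto simp: indicator_def)
    ultimately show ?thesis by simp
  qed
  have "density lborel ?P = density lborel ?N"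
  proof (rule measure_eqI_generator_eq)
    let ?E = "range (\<lambda>(a, b). box a b::'a set)"
    show "Int_stable ?E"
      by (auto simp: Int_stable_def box_Int_box)
    show "?E \<subseteq> Pow UNIV" "sets (density lborel ?P) = sigma_sets UNIV ?E" "sets (density lborel ?N) = sigma_sets UNIV ?E"
      by (simp_all add: borel_eq_box)
    let ?A = "\<lambda>n::nat. box (- (real n *\<^sub>R One)) (real n *\<^sub>R One) :: 'a set"
    show "range ?A \<subseteq> ?E" "(\<Union>i. ?A i) = UNIV"
      unfolding UN_box_eq_UNIV by auto
    show "emeasure (density lborel ?P) (?A i) \<noteq> \<infinity>" for i
    proof -
      have "emeasure (density lborel ?P) (?A i) \<le> (\<integral>\<^sup>+x. ennreal (norm (h x)) \<partial>lborel)"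
        by (simp add: emeasure_density) (intro nn_integral_mono, auto simp: indicator_def)
      then show ?thesis using fin by (simp add: top.not_eq_extremum order_le_less_trans)
    qed
    show "emeasure (density lborel ?P) X = emeasure (density lborel ?N) X" if "X \<in> ?E" for X
      using eqbox[OF that] .
  qed
  then have "AE x in lborel. ?P x = ?N x"
  proof (subst finite_density_unique[symmetric])
    show "integral\<^sup>N lborel ?P \<noteq> \<infinity>"
    proof -
      have "integral\<^sup>N lborel ?P \<le> (\<integral>\<^sup>+x. ennreal (norm (h x)) \<partial>lborel)"
        by (intro nn_integral_mono) (auto intro!: ennreal_leI)
      then show ?thesis using fin by (simp add: top.not_eq_extremum order_le_less_trans)
    qed
  qed auto
  then show ?thesis
  proof eventually_elim
    case (elim x)
    show ?case
    proof (cases "h x \<ge> 0")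
      case True then show ?thesis using elim by (simp add: ennreal_neg)
    next
      case False then show ?thesis using elim by (simp add: ennreal_neg)
    qed
  qed
qed

lemma box_zero_ae:
  fixes h :: "'a::euclidean_space \<Rightarrow> real"
  assumes hi: "integrable lebesgue h"
    and z: "\<And>a b. (\<integral>x. indicator (box a b) x * h x \<partial>lebesgue) = 0"
  shows "AE x in lebesgue. h x = 0"
proof -
  have hm: "h \<in> borel_measurable lebesgue" using hi by auto
  obtain h' where h'm: "h' \<in> borel_measurable lborel" and ae: "AE x in lborel. h x = h' x"
    using completion_ex_borel_measurable_real[OF hm] by auto
  have aec: "AE x in lebesgue. h x = h' x" using ae by (rule AE_completion)
  have "integrable lebesgue h'" by (rule integrable_cong_AE_imp[OF hi measurable_completion[OF h'm] aec])
  then have hi': "integrable lborel h'" using integrable_completion h'm by blast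
  have "(\<integral>x. indicator (box a b) x * h' x \<partial>lborel) = 0" for a b
  proof -
    have "(\<integral>x. indicator (box a b) x * h' x \<partial>lborel) = (\<integral>x. indicator (box a b) x * h' x \<partial>lebesgue)"
      by (rule integral_completion[symmetric]) (use h'm in measurable)
    also have "\<dots> = (\<integral>x. indicator (box a b) x * h x \<partial>lebesgue)"
    proof (rule integral_cong_AE)
      have bx: "box a b \<in> sets lebesgue" by simp
      show "(\<lambda>x. indicator (box a b) x * h' x) \<in> borel_measurable lebesgue"
        by (intro borel_measurable_times borel_measurable_indicator bx measurable_completion[OF h'm])
      show "(\<lambda>x. indicator (box a b) x * h x) \<in> borel_measurable lebesgue"
        by (intro borel_measurable_times borel_measurable_indicator bx hm)
      show "AE x in lebesgue. indicator (box a b) x * h' x = indicator (box a b) x * h x"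
        using aec by auto
    qed
    finally show ?thesis using z by simp
  qed
  from box_zero_ae_lborel[OF h'm hi' this] have "AE x in lborel. h' x = 0" .
  then have "AE x in lebesgue. h' x = 0" by (rule AE_completion)
  with aec show ?thesis by eventually_elim simp
qed

lemma lebesgue_affine':
  fixes t :: "'a::euclidean_space" and c :: real
  assumes c: "c \<noteq> 0"
  shows "lebesgue = density (distr lebesgue lebesgue (\<lambda>x. t + c *\<^sub>R x)) (\<lambda>_. ennreal (\<bar>c\<bar> ^ DIM('a)))"
    and "(\<lambda>x. t + c *\<^sub>R x) \<in> lebesgue \<rightarrow>\<^sub>M lebesgue"
  using lebesgue_affine_euclidean[where c="\<lambda>_::'a. c" and t=t] lebesgue_affine_measurable[where c="\<lambda>_::'a. c" and t=t] c
  unfolding scaleR_scaleR[symmetric] scaleR_sum_right[symmetric] euclidean_representation prod_constant by auto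

lemma lebesgue_transl:
  fixes t :: "'a::euclidean_space"
  shows "lebesgue = distr lebesgue lebesgue (\<lambda>x. t + x)"
    and "(\<lambda>x. t + x) \<in> lebesgue \<rightarrow>\<^sub>M lebesgue"
  using lebesgue_affine'[of 1 t] by (simp_all add: density_1)

lemma integral_transl:
  fixes f :: "'a::euclidean_space \<Rightarrow> 'b::{banach, second_countable_topology}"
  shows "(\<integral>x. f (t + x) \<partial>lebesgue) = (\<integral>x. f x \<partial>lebesgue)"
proof (cases "f \<in> borel_measurable lebesgue")
  case True
  have "(\<integral>x. f x \<partial>lebesgue) = (\<integral>x. f x \<partial>distr lebesgue lebesgue (\<lambda>x. t + x))"
    using lebesgue_transl(1)[of t] by simp
  also have "\<dots> = (\<integral>x. f (t + x) \<partial>lebesgue)"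
    by (rule integral_distr[OF lebesgue_transl(2) True])
  finally show ?thesis by simp
next
  case False
  have "(\<lambda>x. f (t + x)) \<notin> borel_measurable lebesgue"
  proof
    assume "(\<lambda>x. f (t + x)) \<in> borel_measurable lebesgue"
    from measurable_comp[OF lebesgue_transl(2)[of "-t"] this]
    have "(\<lambda>x. f x) \<in> borel_measurable lebesgue" by (simp add: comp_def)
    with False show False by simp
  qed
  then have "\<not> integrable lebesgue (\<lambda>x. f (t + x))" "\<not> integrable lebesgue f"
    using False by auto
  then show ?thesis by (simp add: not_integrable_integral_eq)
qed

lemma nn_integral_affine:
  fixes f :: "'a::euclidean_space \<Rightarrow> ennreal" and c :: real
  assumes f: "f \<in> borel_measurable lebesgue" and c: "c \<noteq> 0"
  shows "(\<integral>\<^sup>+x. f x \<partial>lebesgue) = ennreal (\<bar>c\<bar> ^ DIM('a)) * (\<integral>\<^sup>+x. f (t + c *\<^sub>R x) \<partial>lebesgue)"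
proof -
  have "(\<integral>\<^sup>+x. f x \<partial>lebesgue) = (\<integral>\<^sup>+x. f x \<partial>density (distr lebesgue lebesgue (\<lambda>x. t + c *\<^sub>R x)) (\<lambda>_. ennreal (\<bar>c\<bar> ^ DIM('a))))"
    using lebesgue_affine'(1)[OF c, of t] by simp
  also have "\<dots> = (\<integral>\<^sup>+x. ennreal (\<bar>c\<bar> ^ DIM('a)) * f x \<partial>distr lebesgue lebesgue (\<lambda>x. t + c *\<^sub>R x))"
    by (subst nn_integral_density) (auto simp: f)
  also have "\<dots> = ennreal (\<bar>c\<bar> ^ DIM('a)) * (\<integral>\<^sup>+x. f x \<partial>distr lebesgue lebesgue (\<lambda>x. t + c *\<^sub>R x))"
    by (rule nn_integral_cmult) (simp add: f)
  also have "(\<integral>\<^sup>+x. f x \<partial>distr lebesgue lebesgue (\<lambda>x. t + c *\<^sub>R x)) = (\<integral>\<^sup>+x. f (t + c *\<^sub>R x) \<partial>lebesgue)"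
    by (rule nn_integral_distr[OF lebesgue_affine'(2)[OF c] ]) (simp add: f)
  finally show ?thesis .
qed

lemma AE_transl:
  fixes t :: "'a::euclidean_space"
  assumes "AE x in lebesgue. P x"
  shows "AE x in lebesgue. P (t + x)"
proof -
  obtain N where N: "N \<in> null_sets lebesgue" "{x. \<not> P x} \<subseteq> N"
    using assms unfolding eventually_ae_filter by auto
  have "emeasure lebesgue ((\<lambda>x. t + x) -` N) = emeasure (distr lebesgue lebesgue (\<lambda>x. t + x)) N"
    using N by (subst emeasure_distr[OF lebesgue_transl(2)]) auto
  also have "\<dots> = 0" using N lebesgue_transl(1)[of t] by (metis null_setsD1)
  finally have "(\<lambda>x. t + x) -` N \<in> null_sets lebesgue"
    using N measurable_sets[OF lebesgue_transl(2) , of N t] by (auto simp: null_sets_def)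
  moreover have "{x. \<not> P (t + x)} \<subseteq> (\<lambda>x. t + x) -` N" using N by auto
  ultimately show ?thesis unfolding eventually_ae_filter by blast
qed

lemma integrable_transl:
  fixes f :: "'a::euclidean_space \<Rightarrow> 'b::{banach, second_countable_topology}"
  assumes "integrable lebesgue f"
  shows "integrable lebesgue (\<lambda>x. f (t + x))"
proof -
  have fm: "f \<in> borel_measurable lebesgue" using assms by auto
  have "integrable (distr lebesgue lebesgue (\<lambda>x. t + x)) f"
    using assms lebesgue_transl(1)[of t] by simp
  then show ?thesis using integrable_distr_eq[OF lebesgue_transl(2) fm] by simp
qed

lemma bump_meas: "bump m a (b::('n::finite) pt) \<in> borel_measurable lebesgue"
proof -
  have "(\<lambda>x. x) \<in> borel_measurable (lebesgue :: 'n pt measure)"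
    by (intro measurable_completion measurable_ident_sets) simp
  from borel_measurable_continuous_on[OF bump_cont this] show ?thesis by simp
qed

lemma bump_box_int:
  fixes g :: "('n::finite) pt \<Rightarrow> real"
  assumes gi: "\<And>a b. integrable lebesgue (\<lambda>x. indicator (cbox a b) x * g x)"
    and z: "\<And>m a b. m > 0 \<Longrightarrow> (\<integral>x. g x * bump m a b x \<partial>lebesgue) = 0"
  shows "(\<integral>x. indicator (box a b) x * g x \<partial>lebesgue) = 0"
proof -
  let ?G = "\<lambda>x. indicator (cbox a b) x * g x"
  have Gm: "?G \<in> borel_measurable lebesgue" using gi by auto
  have eq: "g x * bump m a b x = ?G x * bump m a b x" if "m > 0" for m x
    using bump_nz[OF that, of a b x] box_subset_cbox[of a b] by (auto simp: indicator_def)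
  have "(\<lambda>n. \<integral>x. ?G x * bump (real (Suc n)) a b x \<partial>lebesgue) \<longlonglongrightarrow> (\<integral>x. indicator (box a b) x * g x \<partial>lebesgue)"
  proof (rule integral_dominated_convergence[where w="\<lambda>x. norm (?G x)"])
    show "(\<lambda>x. indicator (box a b) x * g x) \<in> borel_measurable lebesgue"
    proof -
      have "(\<lambda>x. indicator (box a b) x * ?G x) \<in> borel_measurable lebesgue"
        by (intro borel_measurable_times borel_measurable_indicator Gm) simp
      moreover have "indicator (box a b) x * ?G x = indicator (box a b) x * g x" for x
        using box_subset_cbox[of a b] by (auto simp: indicator_def)
      ultimately show ?thesis by simp
    qed
    show "(\<lambda>x. ?G x * bump (real (Suc n)) a b x) \<in> borel_measurable lebesgue" for n
      by (intro borel_measurable_times Gm bump_meas)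
    show "integrable lebesgue (\<lambda>x. norm (?G x))" using gi by simp
    show "AE x in lebesgue. (\<lambda>n. ?G x * bump (real (Suc n)) a b x) \<longlonglongrightarrow> indicator (box a b) x * g x"
    proof (intro AE_I2)
      fix x
      have "(\<lambda>n. ?G x * bump (real (Suc n)) a b x) \<longlonglongrightarrow> ?G x * indicator (box a b) x"
        by (intro tendsto_intros bump_lim)
      moreover have "?G x * indicator (box a b) x = indicator (box a b) x * g x"
        using box_subset_cbox[of a b] by (auto simp: indicator_def)
      ultimately show "(\<lambda>n. ?G x * bump (real (Suc n)) a b x) \<longlonglongrightarrow> indicator (box a b) x * g x" by simp
    qed
    show "AE x in lebesgue. norm (?G x * bump (real (Suc n)) a b x) \<le> norm (?G x)" for n
    proof (intro AE_I2)
      fix x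
      have "\<bar>bump (real (Suc n)) a b x\<bar> \<le> 1" using bump_nonneg[of "real (Suc n)" a b x] bump_le1[of "real (Suc n)" a b x] by linarith
      then show "norm (?G x * bump (real (Suc n)) a b x) \<le> norm (?G x)"
        by (simp add: abs_mult mult_left_le)
    qed
  qed
  moreover have "(\<integral>x. ?G x * bump (real (Suc n)) a b x \<partial>lebesgue) = 0" for n
  proof -
    have "(\<integral>x. ?G x * bump (real (Suc n)) a b x \<partial>lebesgue) = (\<integral>x. g x * bump (real (Suc n)) a b x \<partial>lebesgue)"
      by (rule Bochner_Integration.integral_cong[OF refl]) (simp add: eq)
    then show ?thesis using z[of "real (Suc n)" a b] by simp
  qed
  ultimately show ?thesis by (simp add: LIMSEQ_const_iff)
qed

lemma fund_lemma:
  fixes g :: "('n::finite) pt \<Rightarrow> real"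
  assumes gi: "\<And>a b. integrable lebesgue (\<lambda>x. indicator (cbox a b) x * g x)"
    and z: "\<And>m a b. m > 0 \<Longrightarrow> (\<integral>x. g x * bump m a b x \<partial>lebesgue) = 0"
  shows "AE x in lebesgue. g x = 0"
proof -
  have bz: "\<And>a b. (\<integral>x. indicator (box a b) x * g x \<partial>lebesgue) = 0"
    by (rule bump_box_int[OF gi z])
  have "AE x in lebesgue. indicator (box c d) x * g x = 0" for c d :: "'n pt"
  proof (rule box_zero_ae)
    have "integrable lebesgue (\<lambda>x. indicator (box c d) x * (indicator (cbox c d) x * g x))"
      using integrable_real_mult_indicator[of "box c d" lebesgue, OF _ gi[of c d]] by (simp add: mult.commute)
    moreover have "indicator (box c d) x * (indicator (cbox c d) x * g x) = indicator (box c d) x * g x" for x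
      using box_subset_cbox[of c d] by (auto simp: indicator_def)
    ultimately show "integrable lebesgue (\<lambda>x. indicator (box c d) x * g x)" by simp
    fix a b :: "'n pt"
    obtain a' b' where ab: "box a b \<inter> box c d = box a' b'" using box_Int_box by blast
    have "indicator (box a b) x * (indicator (box c d) x * g x) = indicator (box a' b') x * g x" for x
      unfolding ab[symmetric] by (auto simp: indicator_def)
    then have "(\<integral>x. indicator (box a b) x * (indicator (box c d) x * g x) \<partial>lebesgue) = (\<integral>x. indicator (box a' b') x * g x \<partial>lebesgue)"
      by (intro Bochner_Integration.integral_cong refl)
    then show "(\<integral>x. indicator (box a b) x * (indicator (box c d) x * g x) \<partial>lebesgue) = 0"
      using bz by simp
  qed
  then have "\<forall>n::nat. AE x in lebesgue. indicator (box (- (real n *\<^sub>R One)) (real n *\<^sub>R One)) x * g x = 0"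
    by blast
  then have "AE x in lebesgue. \<forall>n::nat. indicator (box (- (real n *\<^sub>R One)) (real n *\<^sub>R One)) x * g x = 0"
    by (subst AE_all_countable)
  then show ?thesis
  proof eventually_elim
    case (elim x)
    obtain n where "x \<in> box (- (real n *\<^sub>R One)) (real n *\<^sub>R One)"
      using UN_box_eq_UNIV[where 'a="'n pt"] by blast
    with elim[rule_format, of n] show ?case by simp
  qed
qed

lemma set_UNIV_int: "set_lebesgue_integral M UNIV f = integral\<^sup>L M f"
  by (simp add: set_lebesgue_integral_def)

lemma int_bump:
  fixes f :: "('n::finite) pt \<Rightarrow> real"
  assumes m: "m > 0" and fi: "integrable lebesgue (\<lambda>x. indicator (cbox a b) x * f x)"
  shows "integrable lebesgue (\<lambda>x. f x * bump m a b x)"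
proof -
  have eq: "f x * bump m a b x = (indicator (cbox a b) x * f x) * bump m a b x" for x
    using bump_nz[OF m, of a b x] box_subset_cbox[of a b] by (auto simp: indicator_def)
  have "integrable lebesgue (\<lambda>x. (indicator (cbox a b) x * f x) * bump m a b x)"
  proof (rule Bochner_Integration.integrable_bound[OF fi])
    show "(\<lambda>x. indicator (cbox a b) x * f x * bump m a b x) \<in> borel_measurable lebesgue"
      by (rule borel_measurable_times[OF borel_measurable_integrable[OF fi] bump_meas])
    show "AE x in lebesgue. norm (indicator (cbox a b) x * f x * bump m a b x) \<le> norm (indicator (cbox a b) x * f x)"
    proof (intro AE_I2)
      fix x
      have "\<bar>bump m a b x\<bar> \<le> 1" using bump_nonneg[of m a b x] bump_le1[of m a b x] by linarith
      then show "norm (indicator (cbox a b) x * f x * bump m a b x) \<le> norm (indicator (cbox a b) x * f x)"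
        by (simp add: abs_mult mult_left_le)
    qed
  qed
  then show ?thesis by (simp add: eq)
qed

lemma locint_comp:
  fixes Dw :: "('n::finite) pt \<Rightarrow> 'n pt"
  assumes "loc_int UNIV Dw"
  shows "integrable lebesgue (\<lambda>x. indicator (cbox a b) x * Dw x $ j)"
proof -
  have "set_integrable lebesgue (cbox a b) Dw" using assms unfolding loc_int_def by auto
  then have "integrable lebesgue (\<lambda>x. indicator (cbox a b) x *\<^sub>R Dw x)" by (simp add: set_integrable_def)
  from integrable_bounded_linear[OF bounded_linear_vec_nth[of j] this]
  show ?thesis by simp
qed

lemma cbox_shift_mem: "(x::('n::finite) pt) \<in> cbox (a - e) (b - e) \<longleftrightarrow> x + e \<in> cbox a b"
  by (auto simp: mem_box_cart) (metis add_le_cancel_right diff_add_cancel, metis le_diff_eq, metis diff_le_eq, metis le_diff_eq)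

lemma cbox_shift_mem2: "(x::('n::finite) pt) - e \<in> cbox (a - e) (b - e) \<longleftrightarrow> x \<in> cbox a b"
  by (simp add: cbox_shift_mem)

lemma weak_grad_periodic:
  fixes w :: "('n::finite) pt \<Rightarrow> real" and Dw :: "'n pt \<Rightarrow> 'n pt" and e :: "'n pt"
  assumes wg: "weak_grad UNIV w Dw" and per: "\<And>x. w (x + e) = w x"
  shows "AE x in lebesgue. Dw (x + e) = Dw x"
proof -
  have li: "loc_int UNIV Dw" using wg unfolding weak_grad_def by auto
  have W: "\<And>\<phi> j. test_fun UNIV \<phi> \<Longrightarrow>
      (\<integral>x. w x * grad \<phi> x $ j \<partial>lebesgue) = - (\<integral>x. Dw x $ j * \<phi> x \<partial>lebesgue)"
    using wg unfolding weak_grad_def set_UNIV_int by auto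
  have perm: "w (y - e) = w y" for y using per[of "y - e"] by simp
  have compj: "AE y in lebesgue. Dw (y - e) $ j = Dw y $ j" for j
  proof -
    let ?g = "\<lambda>y. Dw (y - e) $ j - Dw y $ j"
    have I1: "integrable lebesgue (\<lambda>x. indicator (cbox a b) x * Dw x $ j)" for a b
      by (rule locint_comp[OF li])
    have I2: "integrable lebesgue (\<lambda>y. indicator (cbox a b) y * Dw (y - e) $ j)" for a b
    proof -
      from integrable_transl[OF I1[of "a - e" "b - e"], of "-e"]
      show ?thesis by (simp add: cbox_shift_mem2 indicator_def)
    qed
    show ?thesis
    proof (rule fund_lemma[where g = ?g, THEN AE_mp])
      fix a b show "integrable lebesgue (\<lambda>x. indicator (cbox a b) x * ?g x)"
        using Bochner_Integration.integrable_diff[OF I2[of a b] I1[of a b]] by (simp add: algebra_simps)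
    next
      fix m :: real and a b :: "'n pt" assume m: "m > 0"
      let ?\<phi> = "bump m a b" and ?\<phi>' = "bump m (a - e) (b - e)"
      have t: "test_fun UNIV ?\<phi>'" by (rule bump_test[OF m])
      have gr: "grad ?\<phi>' x = grad ?\<phi> (x + e)" for x
      proof -
        have "?\<phi>' = (\<lambda>x. ?\<phi> (x + e))" by (simp add: bump_shift)
        moreover obtain D where "(?\<phi> has_derivative D) (at (x + e))" using bump_diff by blast
        ultimately show ?thesis using grad_shift by metis
      qed
      have "(\<integral>x. w x * grad ?\<phi>' x $ j \<partial>lebesgue) = (\<integral>x. w ((e + x) - e) * grad ?\<phi> (e + x) $ j \<partial>lebesgue)"
        by (simp add: gr add.commute)
      also have "\<dots> = (\<integral>y. w (y - e) * grad ?\<phi> y $ j \<partial>lebesgue)"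
        by (rule integral_transl[where f = "\<lambda>y. w (y - e) * grad ?\<phi> y $ j"])
      also have "\<dots> = (\<integral>y. w y * grad ?\<phi> y $ j \<partial>lebesgue)" by (simp add: perm)
      also have "\<dots> = - (\<integral>x. Dw x $ j * ?\<phi> x \<partial>lebesgue)" by (rule W[OF bump_test[OF m]])
      finally have A: "(\<integral>x. w x * grad ?\<phi>' x $ j \<partial>lebesgue) = - (\<integral>x. Dw x $ j * ?\<phi> x \<partial>lebesgue)" .
      have "(\<integral>x. Dw x $ j * ?\<phi>' x \<partial>lebesgue) = (\<integral>x. Dw ((e + x) - e) $ j * ?\<phi> (e + x) \<partial>lebesgue)"
        by (simp add: bump_shift[symmetric] add.commute)
      also have "\<dots> = (\<integral>y. Dw (y - e) $ j * ?\<phi> y \<partial>lebesgue)"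
        by (rule integral_transl[where f = "\<lambda>y. Dw (y - e) $ j * ?\<phi> y"])
      finally have B: "(\<integral>x. Dw x $ j * ?\<phi>' x \<partial>lebesgue) = (\<integral>y. Dw (y - e) $ j * ?\<phi> y \<partial>lebesgue)" .
      have eqi: "(\<integral>y. Dw (y - e) $ j * ?\<phi> y \<partial>lebesgue) = (\<integral>x. Dw x $ j * ?\<phi> x \<partial>lebesgue)"
        using W[OF t, of j] A B by simp
      have J1: "integrable lebesgue (\<lambda>y. Dw (y - e) $ j * ?\<phi> y)" by (rule int_bump[OF m I2])
      have J2: "integrable lebesgue (\<lambda>y. Dw y $ j * ?\<phi> y)" by (rule int_bump[OF m I1])
      have "(\<integral>y. ?g y * ?\<phi> y \<partial>lebesgue) = (\<integral>y. Dw (y - e) $ j * ?\<phi> y - Dw y $ j * ?\<phi> y \<partial>lebesgue)"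
        by (simp add: algebra_simps)
      also have "\<dots> = 0" using Bochner_Integration.integral_diff[OF J1 J2] eqi by simp
      finally show "(\<integral>y. ?g y * ?\<phi> y \<partial>lebesgue) = 0" .
    qed auto
  qed
  have "AE y in lebesgue. \<forall>j. Dw (y - e) $ j = Dw y $ j"
    using compj by (subst AE_all_countable) auto
  then have "AE y in lebesgue. Dw (y - e) = Dw y"
    by eventually_elim (simp add: vec_eq_iff)
  from AE_transl[OF this, of e] show ?thesis by (simp add: add.commute eq_commute)
qed

lemma shift_axis_int:
  assumes per: "Y_periodic f"
  shows "f (x + of_int m *\<^sub>R axis j 1) = f x"
proof -
  have pos: "f (x + real n *\<^sub>R axis j 1) = f x" for n x
  proof (induction n arbitrary: x)
    case 0 then show ?case by simp
  next
    case (Suc n)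
    have "f (x + real (Suc n) *\<^sub>R axis j 1) = f ((x + real n *\<^sub>R axis j 1) + axis j 1)"
      by (simp add: algebra_simps)
    also have "\<dots> = f (x + real n *\<^sub>R axis j 1)" using per unfolding Y_periodic_def by blast
    finally show ?case using Suc by simp
  qed
  show ?thesis
  proof (cases "m \<ge> 0")
    case True
    then obtain n where "m = int n" using nonneg_int_cases by blast
    then show ?thesis using pos by simp
  next
    case False
    define n where "n = nat (- m)"
    have n: "m = - int n" using False by (simp add: n_def)
    have "f x = f ((x + of_int m *\<^sub>R axis j 1) + real n *\<^sub>R axis j 1)"
      using n by (simp add: algebra_simps)
    also have "\<dots> = f (x + of_int m *\<^sub>R axis j 1)" by (rule pos)
    finally show ?thesis by simp
  qed
qed

lemma intvec_sum: "intvec k = (\<Sum>j\<in>UNIV. of_int (k j) *\<^sub>R axis j (1::real))"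
  by (simp add: intvec_def vec_eq_iff axis_def if_distrib cong: if_cong)

lemma intvec_periodic:
  assumes per: "Y_periodic f"
  shows "f (x + intvec k) = f x"
proof -
  have "f (x + (\<Sum>j\<in>A. of_int (k j) *\<^sub>R axis j (1::real))) = f x" if "finite A" for A x
    using that
  proof (induction A arbitrary: x rule: finite_induct)
    case empty then show ?case by simp
  next
    case (insert a A)
    have "f (x + (\<Sum>j\<in>insert a A. of_int (k j) *\<^sub>R axis j 1)) =
          f ((x + (\<Sum>j\<in>A. of_int (k j) *\<^sub>R axis j 1)) + of_int (k a) *\<^sub>R axis a 1)"
      using insert by (simp add: algebra_simps)
    also have "\<dots> = f (x + (\<Sum>j\<in>A. of_int (k j) *\<^sub>R axis j 1))" by (rule shift_axis_int[OF per])
    finally show ?case using insert by simp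
  qed
  then show ?thesis by (simp add: intvec_sum)
qed

lemma intvec_add: "intvec k + intvec l = intvec (\<lambda>i. k i + l i)"
  by (simp add: intvec_def vec_eq_iff)

lemma intvec_minus: "- intvec k = intvec (\<lambda>i. - k i)"
  by (simp add: intvec_def vec_eq_iff)

lemma E_periodic:
  assumes micro: "dispersed E \<or> layered E"
  shows "(y + intvec k \<in> E) \<longleftrightarrow> (y \<in> E)"
  using micro
proof
  assume "dispersed E"
  then obtain F where E: "E = (\<Union>k. (\<lambda>y. y + intvec k) ` F)" unfolding dispersed_def by blast
  have imp: "z + intvec l \<in> E" if "z \<in> E" for z l
  proof -
    from that E obtain k f where "f \<in> F" "z = f + intvec k" by auto
    then have "z + intvec l = f + intvec (\<lambda>i. k i + l i)" by (simp add: intvec_add[symmetric] algebra_simps)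
    with \<open>f \<in> F\<close> E show ?thesis by blast
  qed
  show ?thesis
  proof
    assume "y + intvec k \<in> E"
    from imp[OF this, of "\<lambda>i. - k i"] show "y \<in> E" by (simp add: intvec_minus[symmetric])
  qed (rule imp)
next
  assume "layered E"
  then obtain i0 a b where E: "E = {y. a < frac (y $ i0) \<and> frac (y $ i0) < b}" unfolding layered_def by blast
  have "frac (y $ i0 + of_int (k i0)) = frac (y $ i0)"
    by (simp add: frac_def)
  then show ?thesis using E by (simp add: intvec_def)
qed

lemma E_borel:
  assumes micro: "dispersed E \<or> layered E"
  shows "E \<in> sets borel"
  using micro
proof
  assume "dispersed E"
  then obtain F where F: "open F" and E: "E = (\<Union>k. (\<lambda>y. y + intvec k) ` F)" unfolding dispersed_def by blast
  have "open E" unfolding E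
  proof (intro open_UN ballI)
    fix k
    have "open ((\<lambda>y. intvec k + y) ` F)" by (rule open_translation[OF F])
    then show "open ((\<lambda>y. y + intvec k) ` F)" by (simp add: add.commute)
  qed
  then show ?thesis by auto
next
  assume "layered E"
  then obtain i0 a b where E: "E = {y. a < frac (y $ i0) \<and> frac (y $ i0) < b}" unfolding layered_def by blast
  have c: "(\<lambda>y::'a pt. y $ i0) \<in> borel_measurable borel"
    by (intro borel_measurable_continuous_onI continuous_intros)
  have f: "(\<lambda>y::'a pt. real_of_int \<lfloor>y $ i0\<rfloor>) \<in> borel_measurable borel"
    using measurable_comp[OF c borel_measurable_real_floor] by (simp add: comp_def)
  have m: "(\<lambda>y::'a pt. frac (y $ i0)) \<in> borel_measurable borel"
    unfolding frac_def by (rule borel_measurable_diff[OF c f])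
  have "(\<lambda>y::'a pt. frac (y $ i0)) -` {a<..<b} \<inter> space borel \<in> sets borel"
    by (rule measurable_sets[OF m]) simp
  moreover have "(\<lambda>y::'a pt. frac (y $ i0)) -` {a<..<b} \<inter> space borel = E" using E by auto
  ultimately show ?thesis by simp
qed

lemma young1:
  fixes a b q :: real
  assumes a: "0 \<le> a" and b: "0 \<le> b" and q: "1 < q"
  shows "a powr (q - 1) * b \<le> a powr q / 2 + 2 powr (q - 1) * b powr q"
proof (cases "2 * b \<le> a")
  case True
  have "a powr (q - 1) * b \<le> a powr (q - 1) * (a / 2)"
    using True a by (intro mult_left_mono) auto
  also have "\<dots> = a powr q / 2"
  proof (cases "a = 0")
    case False
    then have "a powr (q - 1) * a = a powr q" using a powr_mult_base[of a "q - 1"] by (simp add: mult.commute)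
    then show ?thesis by simp
  qed (use q in simp)
  finally show ?thesis using b by (smt (verit) mult_nonneg_nonneg powr_ge_zero)
next
  case False
  have "a powr (q - 1) \<le> (2 * b) powr (q - 1)" using False a q by (intro powr_mono2) auto
  then have "a powr (q - 1) * b \<le> (2 * b) powr (q - 1) * b" using b by (rule mult_right_mono)
  also have "\<dots> = 2 powr (q - 1) * b powr q"
  proof (cases "b = 0")
    case False
    have "(2 * b) powr (q - 1) * b = 2 powr (q - 1) * (b powr (q - 1) * b)"
      using b by (simp add: powr_mult)
    also have "b powr (q - 1) * b = b powr q" using b powr_mult_base[of b "q - 1"] by (simp add: mult.commute)
    finally show ?thesis .
  qed (use q in simp)
  finally show ?thesis using powr_ge_zero[of a q] by linarith
qed

lemma young2:
  fixes a d q :: real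
  assumes a: "0 \<le> a" and d: "0 \<le> d" and q: "1 < q"
  shows "a powr (q - 1) * d \<le> a powr q + d powr q"
proof (cases "d \<le> a")
  case True
  have "a powr (q - 1) * d \<le> a powr (q - 1) * a" using True a by (intro mult_left_mono) auto
  also have "\<dots> = a powr q"
  proof (cases "a = 0")
    case False
    then show ?thesis using a powr_mult_base[of a "q - 1"] by (simp add: mult.commute)
  qed (use q in simp)
  finally show ?thesis by (smt (verit) powr_ge_zero)
next
  case False
  have "a powr (q - 1) \<le> d powr (q - 1)" using False a q by (intro powr_mono2) auto
  then have "a powr (q - 1) * d \<le> d powr (q - 1) * d" using d by (rule mult_right_mono)
  also have "\<dots> = d powr q"
  proof (cases "d = 0")
    case False
    then show ?thesis using d powr_mult_base[of d "q - 1"] by (simp add: mult.commute)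
  qed (use q in simp)
  finally show ?thesis by (smt (verit) powr_ge_zero)
qed

lemma powr_sum_le:
  fixes x y q :: real
  assumes x: "0 \<le> x" and y: "0 \<le> y" and q: "0 \<le> q"
  shows "(x + y) powr q \<le> 2 powr q * (x powr q + y powr q)"
proof -
  have "(x + y) powr q \<le> (2 * max x y) powr q" using x y q by (intro powr_mono2) auto
  also have "\<dots> = 2 powr q * (max x y) powr q" using x y by (simp add: powr_mult)
  also have "(max x y) powr q \<le> x powr q + y powr q"
    by (cases "x \<le> y") (auto simp: max_def)
  finally show ?thesis by (simp add: mult_left_mono)
qed

lemma Aop_self:
  assumes q: "1 < pexp E p1 p2 y"
  shows "Aop E s1 s2 p1 p2 y P \<bullet> P = sig E s1 s2 y * norm P powr pexp E p1 p2 y"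
proof (cases "P = 0")
  case True then show ?thesis using q by (simp add: Aop_def)
next
  case False
  let ?q = "pexp E p1 p2 y"
  have "Aop E s1 s2 p1 p2 y P \<bullet> P = sig E s1 s2 y * (norm P powr (?q - 2) * norm P ^ 2)"
    by (simp add: Aop_def power2_norm_eq_inner[symmetric])
  also have "norm P powr (?q - 2) * norm P ^ 2 = norm P powr ?q"
  proof -
    have h2: "norm P ^ 2 = norm P powr 2" using False by (simp add: powr_numeral)
    have "norm P powr (?q - 2) * norm P powr 2 = norm P powr (?q - 2 + 2)" by (rule powr_add[symmetric])
    moreover have "?q - 2 + 2 = ?q" by simp
    ultimately show ?thesis by (simp only: h2)
  qed
  finally show ?thesis .
qed

lemma Aop_bound:
  assumes q: "1 < pexp E p1 p2 y" and s: "0 \<le> sig E s1 s2 y"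
  shows "\<bar>Aop E s1 s2 p1 p2 y P \<bullet> z\<bar> \<le> sig E s1 s2 y * (norm P powr (pexp E p1 p2 y - 1) * norm z)"
proof (cases "P = 0")
  case True then show ?thesis using q by (simp add: Aop_def)
next
  case False
  let ?q = "pexp E p1 p2 y" and ?s = "sig E s1 s2 y"
  have "\<bar>Aop E s1 s2 p1 p2 y P \<bullet> z\<bar> = ?s * norm P powr (?q - 2) * \<bar>P \<bullet> z\<bar>"
    using s by (simp add: Aop_def abs_mult)
  also have "\<dots> \<le> ?s * norm P powr (?q - 2) * (norm P * norm z)"
    using s by (intro mult_left_mono Cauchy_Schwarz_ineq2) auto
  also have "\<dots> = ?s * ((norm P * norm P powr (?q - 2)) * norm z)" by (simp add: algebra_simps)
  also have "norm P * norm P powr (?q - 2) = norm P powr (?q - 1)"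
    by (simp add: powr_mult_base)
  finally show ?thesis by simp
qed

lemma Ycell_box: "(Ycell :: ('n::finite) pt set) = box 0 (\<chi> i. 1)"
  by (auto simp: Ycell_def mem_box_cart)

lemma Ycell_sets[measurable]: "(Ycell :: ('n::finite) pt set) \<in> sets lebesgue"
  unfolding Ycell_box by simp

lemma Ycell_emeasure: "emeasure lebesgue (Ycell :: ('n::finite) pt set) = 1"
proof -
  have "emeasure lebesgue (Ycell :: 'n pt set) = emeasure lborel (box (0::'n pt) (\<chi> i. 1))"
    unfolding Ycell_box by (simp add: emeasure_completion)
  also have "\<dots> = 1"
    by (subst emeasure_lborel_box_eq) (auto simp: Basis_vec_def inner_axis intro!: prod.neutral)
  finally show ?thesis .
qed

lemma Ycell_measure: "measure lebesgue (Ycell :: ('n::finite) pt set) = 1"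
  unfolding measure_def by (subst Ycell_emeasure) simp

lemma Ycell_int: "integrable lebesgue (indicator (Ycell :: ('n::finite) pt set) :: _ \<Rightarrow> real)"
  by (rule integrable_real_indicator[OF Ycell_sets]) (subst Ycell_emeasure, simp)

lemma pexp_meas[measurable]: "E \<in> sets lebesgue \<Longrightarrow> pexp E p1 p2 \<in> borel_measurable lebesgue"
  unfolding pexp_def[abs_def] by (rule measurable_If_set) auto

lemma sig_meas[measurable]: "E \<in> sets lebesgue \<Longrightarrow> sig E s1 s2 \<in> borel_measurable lebesgue"
  unfolding sig_def[abs_def] by (rule measurable_If_set) auto

lemma test_meas:
  fixes D :: "('n::finite) pt \<Rightarrow> 'n pt"
  assumes [measurable]: "E \<in> sets lebesgue" "D \<in> borel_measurable lebesgue"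
  shows "(\<lambda>y. indicator Ycell y * (Aop E s1 s2 p1 p2 y (\<xi> + D y) \<bullet> D y)) \<in> borel_measurable lebesgue"
    "(\<lambda>y. indicator Ycell y * (sig E s1 s2 y * norm (\<xi> + D y) powr pexp E p1 p2 y)) \<in> borel_measurable lebesgue"
  unfolding Aop_def by measurable

lemma pexp_cases: "pexp E p1 p2 y = p1 \<or> pexp E p1 p2 y = p2" by (simp add: pexp_def)
lemma sig_cases: "sig E s1 s2 y = s1 \<or> sig E s1 s2 y = s2" by (simp add: sig_def)

lemma cell_energy_core:
  fixes E :: "('n::finite) pt set" and D :: "'n pt \<Rightarrow> 'n pt" and \<xi> :: "'n pt"
  assumes s1: "0 < s1" and s2: "0 < s2" and p1: "1 < p1" and p12: "p1 \<le> p2"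
    and Em[measurable]: "E \<in> sets lebesgue"
    and Dm[measurable]: "D \<in> borel_measurable lebesgue"
    and Di: "integrable lebesgue (\<lambda>y. indicator Ycell y * norm (D y) powr pexp E p1 p2 y)"
    and eqn: "(\<integral>y. indicator Ycell y * (Aop E s1 s2 p1 p2 y (\<xi> + D y) \<bullet> D y) \<partial>lebesgue) = 0"
  shows "(\<integral>y. indicator Ycell y * norm (\<xi> + D y) powr pexp E p1 p2 y \<partial>lebesgue)
           \<le> 2 * 2 powr p2 * max s1 s2 / min s1 s2 * (norm \<xi> powr p1 + norm \<xi> powr p2)"
    and "integrable lebesgue (\<lambda>y. indicator Ycell y * norm (\<xi> + D y) powr pexp E p1 p2 y)"
proof -
  define I :: "'n pt \<Rightarrow> real" where "I = indicator Ycell"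
  define q where "q = pexp E p1 p2"
  define \<sigma> where "\<sigma> = sig E s1 s2"
  define A where "A = (\<lambda>y. Aop E s1 s2 p1 p2 y (\<xi> + D y))"
  define N where "N = norm \<xi> powr p1 + norm \<xi> powr p2"
  define S where "S = max s1 s2"
  define m where "m = min s1 s2"
  have [measurable]: "I \<in> borel_measurable lebesgue" "q \<in> borel_measurable lebesgue" "\<sigma> \<in> borel_measurable lebesgue"
    unfolding I_def q_def \<sigma>_def by measurable
  have Am[measurable]: "A \<in> borel_measurable lebesgue" unfolding A_def Aop_def by measurable
  have I01: "I y = 0 \<or> I y = 1" for y by (simp add: I_def indicator_def)
  have Ipos: "0 \<le> I y" for y by (simp add: I_def)
  have q1: "1 < q y" and q2: "q y \<le> p2" for y using pexp_cases[of E p1 p2 y] p1 p12 unfolding q_def by auto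
  have sm: "m \<le> \<sigma> y" and sS: "\<sigma> y \<le> S" and spos: "0 < \<sigma> y" for y
    using sig_cases[of E s1 s2 y] s1 s2 unfolding m_def S_def \<sigma>_def by auto
  have Spos: "0 < S" "0 < m" using s1 s2 by (auto simp: S_def m_def)
  have Npos: "0 \<le> N" by (simp add: N_def)
  have xiq: "norm \<xi> powr q y \<le> N" for y
    using pexp_cases[of E p1 p2 y] unfolding N_def q_def by auto
  have Ii: "integrable lebesgue I" unfolding I_def by (rule Ycell_int)
  have intI: "(\<integral>y. I y \<partial>lebesgue) = 1" unfolding I_def using Ycell_measure by simp
  define fA where "fA = (\<lambda>y. I y * (\<sigma> y * norm (\<xi> + D y) powr q y))"
  define fD where "fD = (\<lambda>y. I y * (A y \<bullet> D y))"
  define fX where "fX = (\<lambda>y. I y * (A y \<bullet> \<xi>))"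
  define gB where "gB = (\<lambda>y. I y * (\<sigma> y * (2 powr (q y - 1) * norm \<xi> powr q y)))"
  define aQ where "aQ = (\<lambda>y. I y * norm (\<xi> + D y) powr q y)"
  define dQ where "dQ = (\<lambda>y. I y * norm (D y) powr q y)"
  have dQi: "integrable lebesgue dQ" using Di unfolding dQ_def I_def q_def by simp
  have [measurable]: "fA \<in> borel_measurable lebesgue" "fD \<in> borel_measurable lebesgue" "fX \<in> borel_measurable lebesgue"
    "gB \<in> borel_measurable lebesgue" "aQ \<in> borel_measurable lebesgue" "dQ \<in> borel_measurable lebesgue"
    unfolding fA_def fD_def fX_def gB_def aQ_def dQ_def by measurable
  have P1: "fA y = fX y + fD y" for y
  proof -
    have "A y \<bullet> (\<xi> + D y) = \<sigma> y * norm (\<xi> + D y) powr q y"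
      unfolding A_def \<sigma>_def q_def by (rule Aop_self) (use q1 in \<open>simp add: q_def\<close>)
    then have "A y \<bullet> \<xi> + A y \<bullet> D y = \<sigma> y * norm (\<xi> + D y) powr q y" by (simp add: inner_add_right)
    then show ?thesis unfolding fA_def fX_def fD_def by (simp add: distrib_left[symmetric])
  qed
  have Abnd: "\<bar>A y \<bullet> z\<bar> \<le> \<sigma> y * (norm (\<xi> + D y) powr (q y - 1) * norm z)" for y z
    unfolding A_def \<sigma>_def q_def by (rule Aop_bound) (use q1 spos in \<open>auto simp: q_def \<sigma>_def less_imp_le\<close>)
  have P2: "norm (fD y) \<le> S * (aQ y + dQ y)" for y
  proof -
    have "\<bar>A y \<bullet> D y\<bar> \<le> \<sigma> y * (norm (\<xi> + D y) powr (q y - 1) * norm (D y))" by (rule Abnd)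
    also have "\<dots> \<le> \<sigma> y * (norm (\<xi> + D y) powr q y + norm (D y) powr q y)"
      using spos[of y] by (intro mult_left_mono young2 q1) auto
    also have "\<dots> \<le> S * (norm (\<xi> + D y) powr q y + norm (D y) powr q y)"
      using sS[of y] by (intro mult_right_mono) auto
    finally show ?thesis using I01[of y] unfolding fD_def aQ_def dQ_def by (auto simp: abs_mult algebra_simps)
  qed
  have P3: "fX y \<le> fA y / 2 + gB y" for y
  proof -
    have "A y \<bullet> \<xi> \<le> \<sigma> y * (norm (\<xi> + D y) powr (q y - 1) * norm \<xi>)" using Abnd[of y \<xi>] by linarith
    also have "\<dots> \<le> \<sigma> y * (norm (\<xi> + D y) powr q y / 2 + 2 powr (q y - 1) * norm \<xi> powr q y)"
      using spos[of y] by (intro mult_left_mono young1 q1) auto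
    finally show ?thesis using I01[of y] unfolding fX_def fA_def gB_def by (auto simp: algebra_simps)
  qed
  have P4: "aQ y \<le> 2 powr p2 * (N * I y + dQ y)" for y
  proof -
    have "norm (\<xi> + D y) powr q y \<le> (norm \<xi> + norm (D y)) powr q y"
      using q1[of y] by (intro powr_mono2 norm_triangle_ineq) auto
    also have "\<dots> \<le> 2 powr q y * (norm \<xi> powr q y + norm (D y) powr q y)"
      using q1[of y] by (intro powr_sum_le) auto
    also have "\<dots> \<le> 2 powr p2 * (N + norm (D y) powr q y)"
      using q2[of y] xiq[of y] by (intro mult_mono add_mono) auto
    finally show ?thesis using I01[of y] unfolding aQ_def dQ_def by (auto simp: algebra_simps)
  qed
  have P5: "gB y \<le> S * 2 powr p2 * N * I y" for y
  proof -
    have "\<sigma> y * (2 powr (q y - 1) * norm \<xi> powr q y) \<le> S * (2 powr p2 * N)"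
      using sS[of y] spos[of y] q2[of y] xiq[of y] Spos Npos
      by (intro mult_mono) (auto intro!: mult_mono)
    then show ?thesis using I01[of y] unfolding gB_def by (auto simp: algebra_simps)
  qed
  have P6: "m * aQ y \<le> fA y" for y
    using I01[of y] sm[of y] unfolding aQ_def fA_def by (auto intro!: mult_right_mono)
  have aQpos: "0 \<le> aQ y" for y unfolding aQ_def using Ipos by simp
  have dQpos: "0 \<le> dQ y" for y unfolding dQ_def using Ipos by simp
  have aQi: "integrable lebesgue aQ"
  proof (rule Bochner_Integration.integrable_bound[where f="\<lambda>y. 2 powr p2 * (N * I y + dQ y)"])
    show "integrable lebesgue (\<lambda>y. 2 powr p2 * (N * I y + dQ y))" using Ii dQi by auto
    show "AE y in lebesgue. norm (aQ y) \<le> norm (2 powr p2 * (N * I y + dQ y))"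
      using P4 aQpos dQpos Ipos Npos by (auto intro!: AE_I2 simp: abs_of_nonneg)
  qed simp
  have fAi: "integrable lebesgue fA"
  proof (rule Bochner_Integration.integrable_bound[where f="\<lambda>y. S * aQ y"])
    show "integrable lebesgue (\<lambda>y. S * aQ y)" using aQi by auto
    show "AE y in lebesgue. norm (fA y) \<le> norm (S * aQ y)"
    proof (intro AE_I2)
      fix y
      have "\<sigma> y * norm (\<xi> + D y) powr q y \<le> S * norm (\<xi> + D y) powr q y"
        using sS[of y] by (intro mult_right_mono) auto
      then show "norm (fA y) \<le> norm (S * aQ y)"
        using I01[of y] spos[of y] Spos unfolding fA_def aQ_def by (auto simp: abs_mult)
    qed
  qed simp
  have fDi: "integrable lebesgue fD"
  proof (rule Bochner_Integration.integrable_bound[where f="\<lambda>y. S * (aQ y + dQ y)"])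
    show "integrable lebesgue (\<lambda>y. S * (aQ y + dQ y))" using aQi dQi by auto
    show "AE y in lebesgue. norm (fD y) \<le> norm (S * (aQ y + dQ y))"
      using P2 aQpos dQpos Spos by (auto intro!: AE_I2 simp: abs_mult)
  qed simp
  have fXi: "integrable lebesgue fX"
  proof -
    have "integrable lebesgue (\<lambda>y. fA y - fD y)" using fAi fDi by auto
    moreover have "fA y - fD y = fX y" for y using P1[of y] by simp
    ultimately show ?thesis by simp
  qed
  have gBi: "integrable lebesgue gB"
  proof (rule Bochner_Integration.integrable_bound[where f="\<lambda>y. S * 2 powr p2 * N * I y"])
    show "integrable lebesgue (\<lambda>y. S * 2 powr p2 * N * I y)" using Ii by auto
    show "AE y in lebesgue. norm (gB y) \<le> norm (S * 2 powr p2 * N * I y)"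
    proof (intro AE_I2)
      fix y
      have "0 \<le> gB y" unfolding gB_def using Ipos[of y] spos[of y] by auto
      then show "norm (gB y) \<le> norm (S * 2 powr p2 * N * I y)"
        using P5[of y] Spos Npos Ipos[of y] by (simp add: abs_mult)
    qed
  qed simp
  have fD0: "(\<integral>y. fD y \<partial>lebesgue) = 0" using eqn unfolding fD_def I_def A_def by simp
  have "(\<integral>y. fA y \<partial>lebesgue) = (\<integral>y. fX y \<partial>lebesgue) + (\<integral>y. fD y \<partial>lebesgue)"
    unfolding P1 by (rule Bochner_Integration.integral_add[OF fXi fDi])
  also have "\<dots> = (\<integral>y. fX y \<partial>lebesgue)" using fD0 by simp
  also have "\<dots> \<le> (\<integral>y. fA y / 2 + gB y \<partial>lebesgue)"
    using fAi gBi fXi P3 by (intro integral_mono) auto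
  also have "\<dots> = (\<integral>y. fA y \<partial>lebesgue) / 2 + (\<integral>y. gB y \<partial>lebesgue)"
    using fAi gBi by simp
  finally have "(\<integral>y. fA y \<partial>lebesgue) \<le> 2 * (\<integral>y. gB y \<partial>lebesgue)" by simp
  also have "(\<integral>y. gB y \<partial>lebesgue) \<le> (\<integral>y. S * 2 powr p2 * N * I y \<partial>lebesgue)"
    using gBi Ii P5 by (intro integral_mono) auto
  also have "(\<integral>y. S * 2 powr p2 * N * I y \<partial>lebesgue) = S * 2 powr p2 * N"
    using intI by simp
  finally have fAb: "(\<integral>y. fA y \<partial>lebesgue) \<le> 2 * (S * 2 powr p2 * N)" by simp
  have "m * (\<integral>y. aQ y \<partial>lebesgue) = (\<integral>y. m * aQ y \<partial>lebesgue)" by simp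
  also have "\<dots> \<le> (\<integral>y. fA y \<partial>lebesgue)" using aQi fAi P6 by (intro integral_mono) auto
  finally have "m * (\<integral>y. aQ y \<partial>lebesgue) \<le> 2 * (S * 2 powr p2 * N)" using fAb by simp
  then have "(\<integral>y. aQ y \<partial>lebesgue) \<le> 2 * (S * 2 powr p2 * N) / m"
    using Spos by (simp add: field_simps)
  then show "(\<integral>y. indicator Ycell y * norm (\<xi> + D y) powr pexp E p1 p2 y \<partial>lebesgue)
           \<le> 2 * 2 powr p2 * max s1 s2 / min s1 s2 * (norm \<xi> powr p1 + norm \<xi> powr p2)"
    unfolding aQ_def I_def q_def S_def m_def N_def by (simp add: field_simps)
  show "integrable lebesgue (\<lambda>y. indicator Ycell y * norm (\<xi> + D y) powr pexp E p1 p2 y)"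
    using aQi unfolding aQ_def I_def q_def .
qed

definition Kc :: "real \<Rightarrow> real \<Rightarrow> real \<Rightarrow> real" where
  "Kc s1 s2 p2 = 2 * 2 powr p2 * max s1 s2 / min s1 s2"

definition Nf :: "('n::finite) pt \<Rightarrow> real \<Rightarrow> real \<Rightarrow> real" where
  "Nf \<xi> p1 p2 = norm \<xi> powr p1 + norm \<xi> powr p2"


lemma cell_energy:
  fixes E :: "('n::finite) pt set"
  assumes s1: "0 < s1" and s2: "0 < s2" and p1: "1 < p1" and p12: "p1 \<le> p2"
    and Em: "E \<in> sets lebesgue"
    and cell: "cell_solutions E s1 s2 p1 p2 v Dv"
  shows "integrable lebesgue (\<lambda>y. indicator Ycell y * norm (\<xi> + Dv \<xi> y) powr pexp E p1 p2 y)"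
    and "(\<integral>y. indicator Ycell y * norm (\<xi> + Dv \<xi> y) powr pexp E p1 p2 y \<partial>lebesgue) \<le> Kc s1 s2 p2 * Nf \<xi> p1 p2"
proof -
  have ps: "per_space E p1 p2 (v \<xi>) (Dv \<xi>)" and
    orth: "(LINT y:Ycell|lebesgue. Aop E s1 s2 p1 p2 y (\<xi> + Dv \<xi> y) \<bullet> Dv \<xi> y) = 0"
    using cell unfolding cell_solutions_def by blast+
  define Dz where "Dz = (\<lambda>y. indicator Ycell y *\<^sub>R Dv \<xi> y)"
  have Dm: "Dz \<in> borel_measurable lebesgue"
    using ps unfolding per_space_def W1p_def Lp_def set_borel_measurable_def Dz_def by blast
  have "set_integrable lebesgue Ycell (\<lambda>y. norm (Dv \<xi> y) powr pexp E p1 p2 y)"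
    using ps unfolding per_space_def by blast
  then have "integrable lebesgue (\<lambda>y. indicator Ycell y * norm (Dv \<xi> y) powr pexp E p1 p2 y)"
    by (simp add: set_integrable_def)
  moreover have "(\<lambda>y. indicator Ycell y * norm (Dz y) powr pexp E p1 p2 y) = (\<lambda>y. indicator Ycell y * norm (Dv \<xi> y) powr pexp E p1 p2 y)"
    unfolding Dz_def by (rule ext) (simp add: indicator_def)
  ultimately have Di: "integrable lebesgue (\<lambda>y. indicator Ycell y * norm (Dz y) powr pexp E p1 p2 y)" by (simp only:)
  have e1: "indicator Ycell y * (Aop E s1 s2 p1 p2 y (\<xi> + Dz y) \<bullet> Dz y) = indicator Ycell y * (Aop E s1 s2 p1 p2 y (\<xi> + Dv \<xi> y) \<bullet> Dv \<xi> y)" for y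
    unfolding Dz_def by (simp add: indicator_def)
  have eqn: "(\<integral>y. indicator Ycell y * (Aop E s1 s2 p1 p2 y (\<xi> + Dz y) \<bullet> Dz y) \<partial>lebesgue) = 0"
    using orth unfolding e1 set_lebesgue_integral_def by simp
  have e2: "indicator Ycell y * norm (\<xi> + Dz y) powr pexp E p1 p2 y = indicator Ycell y * norm (\<xi> + Dv \<xi> y) powr pexp E p1 p2 y" for y
    unfolding Dz_def by (simp add: indicator_def)
  note core = cell_energy_core[OF s1 s2 p1 p12 Em Dm Di eqn]
  show "integrable lebesgue (\<lambda>y. indicator Ycell y * norm (\<xi> + Dv \<xi> y) powr pexp E p1 p2 y)"
    using core(2) unfolding e2 .
  show "(\<integral>y. indicator Ycell y * norm (\<xi> + Dv \<xi> y) powr pexp E p1 p2 y \<partial>lebesgue) \<le> Kc s1 s2 p2 * Nf \<xi> p1 p2"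
    using core(1) unfolding e2 Kc_def Nf_def by simp
qed

lemma eps_cell_scaled:
  assumes e: "\<epsilon> > 0"
  shows "x \<in> eps_cell \<epsilon> k \<longleftrightarrow> (1/\<epsilon>) *\<^sub>R x - intvec k \<in> Ycell"
proof -
  have "\<epsilon> * of_int (k i) < x $ i \<and> x $ i < \<epsilon> * (of_int (k i) + 1) \<longleftrightarrow>
        0 < x $ i / \<epsilon> - of_int (k i) \<and> x $ i / \<epsilon> - of_int (k i) < 1" for i
    using e by (auto simp: field_simps)
  then show ?thesis by (simp add: eps_cell_def Ycell_def intvec_def)
qed

lemma Ycell_shift_cbox:
  assumes "y - intvec k \<in> Ycell"
  shows "y \<in> cbox (intvec k) (intvec k + (\<chi> i. 1) :: ('n::finite) pt)"
proof -
  have h: "0 < y $ i - of_int (k i) \<and> y $ i - of_int (k i) < 1" for i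
    using assms by (simp add: Ycell_def intvec_def)
  show ?thesis unfolding mem_box_cart
  proof (intro conjI allI)
    fix i
    show "intvec k $ i \<le> y $ i" using h[of i] by (simp add: intvec_def)
    show "y $ i \<le> (intvec k + (\<chi> i. 1)) $ i" using h[of i] by (simp add: intvec_def)
  qed
qed

lemma cell_bound:
  fixes E :: "('n::finite) pt set" and \<xi> :: "'n pt"
  assumes e: "\<epsilon> > 0"
    and s1: "0 < s1" and s2: "0 < s2" and p1: "1 < p1" and p12: "p1 \<le> p2"
    and micro: "dispersed E \<or> layered E"
    and cell: "cell_solutions E s1 s2 p1 p2 v Dv"
  shows "(\<integral>\<^sup>+ x. ennreal (indicator (eps_cell \<epsilon> k) x * norm (\<xi> + Dv \<xi> ((1/\<epsilon>) *\<^sub>R x)) powr pexp E p1 p2 ((1/\<epsilon>) *\<^sub>R x)) \<partial>lebesgue)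
          \<le> ennreal (\<epsilon> ^ CARD('n) * (Kc s1 s2 p2 * Nf \<xi> p1 p2))"
    and "(\<lambda>x. ennreal (indicator (eps_cell \<epsilon> k) x * norm (\<xi> + Dv \<xi> ((1/\<epsilon>) *\<^sub>R x)) powr pexp E p1 p2 ((1/\<epsilon>) *\<^sub>R x)))
          \<in> borel_measurable lebesgue"
proof -
  have Eb: "E \<in> sets borel" by (rule E_borel[OF micro])
  then have Em[measurable]: "E \<in> sets lebesgue" by auto
  have ps: "per_space E p1 p2 (v \<xi>) (Dv \<xi>)" using cell unfolding cell_solutions_def by blast
  have per: "Y_periodic (v \<xi>)" and wg: "weak_grad UNIV (v \<xi>) (Dv \<xi>)" using ps unfolding per_space_def by auto
  have li: "loc_int UNIV (Dv \<xi>)" using wg unfolding weak_grad_def by auto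
  define Ck where "Ck = cbox (intvec k) (intvec k + (\<chi> i. 1) :: 'n pt)"
  define Dz where "Dz = (\<lambda>y. indicator Ck y *\<^sub>R Dv \<xi> y)"
  have "set_integrable lebesgue Ck (Dv \<xi>)" using li unfolding loc_int_def Ck_def by auto
  then have Dzm[measurable]: "Dz \<in> borel_measurable lebesgue"
    unfolding Dz_def set_integrable_def by auto
  have indm[measurable]: "(\<lambda>y. indicator Ycell (y - intvec k) :: real) \<in> borel_measurable lebesgue"
    using measurable_comp[OF lebesgue_transl(2)[of "- intvec k"] borel_measurable_indicator[OF Ycell_sets]]
    by (simp add: comp_def)
  define H where "H = (\<lambda>y. ennreal (indicator Ycell (y - intvec k) * norm (\<xi> + Dz y) powr pexp E p1 p2 y))"
  have Hm[measurable]: "H \<in> borel_measurable lebesgue" unfolding H_def by measurable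
  have Dz_eq: "Dz y = Dv \<xi> y" if "y - intvec k \<in> Ycell" for y
    using Ycell_shift_cbox[OF that] unfolding Dz_def Ck_def by simp
  have A: "ennreal (indicator (eps_cell \<epsilon> k) x * norm (\<xi> + Dv \<xi> ((1/\<epsilon>) *\<^sub>R x)) powr pexp E p1 p2 ((1/\<epsilon>) *\<^sub>R x))
        = H ((1/\<epsilon>) *\<^sub>R x)" for x
  proof (cases "x \<in> eps_cell \<epsilon> k")
    case True
    then have "(1/\<epsilon>) *\<^sub>R x - intvec k \<in> Ycell" using eps_cell_scaled[OF e] by blast
    then show ?thesis using True Dz_eq unfolding H_def by simp
  next
    case False
    then have "(1/\<epsilon>) *\<^sub>R x - intvec k \<notin> Ycell" using eps_cell_scaled[OF e] by blast
    then show ?thesis using False unfolding H_def by simp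
  qed
  have Hsm: "(\<lambda>x. H ((1/\<epsilon>) *\<^sub>R x)) \<in> borel_measurable lebesgue"
    using measurable_comp[OF lebesgue_measurable_scaling[of "1/\<epsilon>"] Hm] by (simp add: comp_def)
  have "(\<integral>\<^sup>+ x. H ((1/\<epsilon>) *\<^sub>R x) \<partial>lebesgue) = ennreal (\<bar>\<epsilon>\<bar> ^ DIM('n pt)) * (\<integral>\<^sup>+ y. H ((1/\<epsilon>) *\<^sub>R (0 + \<epsilon> *\<^sub>R y)) \<partial>lebesgue)"
    by (rule nn_integral_affine[OF Hsm]) (use e in simp)
  also have "(\<lambda>y. H ((1/\<epsilon>) *\<^sub>R (0 + \<epsilon> *\<^sub>R y))) = H" using e by (simp add: fun_eq_iff)
  finally have B: "(\<integral>\<^sup>+ x. H ((1/\<epsilon>) *\<^sub>R x) \<partial>lebesgue) = ennreal (\<epsilon> ^ CARD('n)) * integral\<^sup>N lebesgue H"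
    using e by simp
  have "integral\<^sup>N lebesgue H = ennreal (\<bar>1\<bar> ^ DIM('n pt)) * (\<integral>\<^sup>+ y. H (intvec k + 1 *\<^sub>R y) \<partial>lebesgue)"
    by (rule nn_integral_affine[OF Hm]) simp
  then have C: "integral\<^sup>N lebesgue H = (\<integral>\<^sup>+ y. H (intvec k + y) \<partial>lebesgue)" by simp
  have perD: "AE y in lebesgue. Dv \<xi> (y + intvec k) = Dv \<xi> y"
    by (rule weak_grad_periodic[OF wg intvec_periodic[OF per]])
  have D: "AE y in lebesgue. H (intvec k + y) = ennreal (indicator Ycell y * norm (\<xi> + Dv \<xi> y) powr pexp E p1 p2 y)"
    using perD
  proof eventually_elim
    case (elim y)
    show ?case
    proof (cases "y \<in> Ycell")
      case True
      have "Dz (intvec k + y) = Dv \<xi> y" using Dz_eq[of "intvec k + y"] True elim by (simp add: add.commute)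
      moreover have "pexp E p1 p2 (intvec k + y) = pexp E p1 p2 y"
        using E_periodic[OF micro, of y k] by (simp add: pexp_def add.commute)
      ultimately show ?thesis using True unfolding H_def by simp
    next
      case False then show ?thesis unfolding H_def by simp
    qed
  qed
  note ce = cell_energy[OF s1 s2 p1 p12 Em cell, of \<xi>]
  have "(\<integral>\<^sup>+ y. ennreal (indicator Ycell y * norm (\<xi> + Dv \<xi> y) powr pexp E p1 p2 y) \<partial>lebesgue)
        = ennreal (\<integral>y. indicator Ycell y * norm (\<xi> + Dv \<xi> y) powr pexp E p1 p2 y \<partial>lebesgue)"
    by (rule nn_integral_eq_integral[OF ce(1)]) auto
  also have "\<dots> \<le> ennreal (Kc s1 s2 p2 * Nf \<xi> p1 p2)" using ce(2) by (rule ennreal_leI)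
  finally have Eb: "integral\<^sup>N lebesgue H \<le> ennreal (Kc s1 s2 p2 * Nf \<xi> p1 p2)"
    unfolding C using nn_integral_cong_AE[OF D] by simp
  have "(\<integral>\<^sup>+ x. ennreal (indicator (eps_cell \<epsilon> k) x * norm (\<xi> + Dv \<xi> ((1/\<epsilon>) *\<^sub>R x)) powr pexp E p1 p2 ((1/\<epsilon>) *\<^sub>R x)) \<partial>lebesgue)
      = ennreal (\<epsilon> ^ CARD('n)) * integral\<^sup>N lebesgue H" unfolding A B ..
  also have "\<dots> \<le> ennreal (\<epsilon> ^ CARD('n)) * ennreal (Kc s1 s2 p2 * Nf \<xi> p1 p2)"
    by (intro mult_left_mono Eb) auto
  also have "\<dots> = ennreal (\<epsilon> ^ CARD('n) * (Kc s1 s2 p2 * Nf \<xi> p1 p2))"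
  proof -
    have "0 \<le> Kc s1 s2 p2" using s1 s2 by (simp add: Kc_def)
    moreover have "0 \<le> Nf \<xi> p1 p2" by (simp add: Nf_def)
    ultimately show ?thesis using e by (simp add: ennreal_mult)
  qed
  finally show "(\<integral>\<^sup>+ x. ennreal (indicator (eps_cell \<epsilon> k) x * norm (\<xi> + Dv \<xi> ((1/\<epsilon>) *\<^sub>R x)) powr pexp E p1 p2 ((1/\<epsilon>) *\<^sub>R x)) \<partial>lebesgue)
          \<le> ennreal (\<epsilon> ^ CARD('n) * (Kc s1 s2 p2 * Nf \<xi> p1 p2))" .
  show "(\<lambda>x. ennreal (indicator (eps_cell \<epsilon> k) x * norm (\<xi> + Dv \<xi> ((1/\<epsilon>) *\<^sub>R x)) powr pexp E p1 p2 ((1/\<epsilon>) *\<^sub>R x)))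
          \<in> borel_measurable lebesgue" unfolding A by (rule Hsm)
qed

lemma eps_cell_box: "eps_cell \<epsilon> k = box (\<epsilon> *\<^sub>R intvec k) (\<epsilon> *\<^sub>R (intvec k + (\<chi> i. 1)) :: ('n::finite) pt)"
  by (auto simp: eps_cell_def mem_box_cart intvec_def)

lemma eps_cell_sets[measurable]: "eps_cell \<epsilon> k \<in> sets lebesgue"
  unfolding eps_cell_box by simp

lemma eps_cell_emeasure:
  assumes e: "\<epsilon> > 0"
  shows "emeasure lebesgue (eps_cell \<epsilon> k :: ('n::finite) pt set) = ennreal (\<epsilon> ^ CARD('n))"
proof -
  have "emeasure lebesgue (eps_cell \<epsilon> k :: 'n pt set) = emeasure lborel (box (\<epsilon> *\<^sub>R intvec k) (\<epsilon> *\<^sub>R (intvec k + (\<chi> i. 1)) :: 'n pt))"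
    unfolding eps_cell_box by (simp add: emeasure_completion)
  also have "\<dots> = ennreal (\<Prod>b\<in>(Basis :: 'n pt set). \<epsilon>)"
  proof -
    have d: "\<epsilon> *\<^sub>R (intvec k + (\<chi> i. 1)) - \<epsilon> *\<^sub>R intvec k = ((\<chi> i. \<epsilon>) :: 'n pt)"
      by (simp add: vec_eq_iff algebra_simps)
    have hb: "(\<epsilon> *\<^sub>R (intvec k + (\<chi> i. 1)) - \<epsilon> *\<^sub>R intvec k) \<bullet> b = \<epsilon>" if "b \<in> (Basis :: 'n pt set)" for b
      using that unfolding d by (auto simp: Basis_vec_def inner_axis)
    have hl: "(\<epsilon> *\<^sub>R intvec k) \<bullet> b \<le> (\<epsilon> *\<^sub>R (intvec k + (\<chi> i. 1))) \<bullet> b" if "b \<in> (Basis :: 'n pt set)" for b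
      using that e by (auto simp: Basis_vec_def inner_axis intvec_def)
    show ?thesis using hb hl by (subst emeasure_lborel_box_eq) (auto intro!: prod.cong)
  qed
  also have "(\<Prod>b\<in>(Basis :: 'n pt set). \<epsilon>) = \<epsilon> ^ CARD('n)" by simp
  finally show ?thesis .
qed

lemma eps_cell_measure:
  assumes e: "\<epsilon> > 0"
  shows "measure lebesgue (eps_cell \<epsilon> k :: ('n::finite) pt set) = \<epsilon> ^ CARD('n)"
  unfolding measure_def using e by (subst eps_cell_emeasure[OF e]) simp

lemma eps_cell_disj:
  assumes e: "\<epsilon> > 0" and x: "x \<in> eps_cell \<epsilon> k" "x \<in> eps_cell \<epsilon> k'"
  shows "k = k'"
proof
  fix i
  have "\<epsilon> * of_int (k i) < x $ i" "x $ i < \<epsilon> * (of_int (k i) + 1)"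
       "\<epsilon> * of_int (k' i) < x $ i" "x $ i < \<epsilon> * (of_int (k' i) + 1)"
    using x by (auto simp: eps_cell_def)
  then have "of_int (k i) < x $ i / \<epsilon>" "x $ i / \<epsilon> < of_int (k i) + 1"
      "of_int (k' i) < x $ i / \<epsilon>" "x $ i / \<epsilon> < of_int (k' i) + 1"
    using e by (auto simp: field_simps)
  then have "k i < k' i + 1" "k' i < k i + 1" by linarith+
  then show "k i = k' i" by linarith
qed

lemma eps_cell_nonempty: "\<epsilon> > 0 \<Longrightarrow> eps_cell \<epsilon> k \<noteq> {}"
  unfolding eps_cell_box by (auto simp: box_eq_empty(1) Basis_vec_def inner_axis)

lemma tangent_powr:
  fixes M t p :: real
  assumes M: "M > 0" and t: "t \<ge> 0" and p: "p \<ge> 1"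
  shows "M powr p + p * M powr (p - 1) * (t - M) \<le> t powr p"
proof (cases "t > 0")
  case True
  have "p * M powr (p - 1) * (t - M) \<le> t powr p - M powr p"
  proof (rule convex_on_imp_above_tangent[OF powr_convex[OF p]])
    show "connected {0::real<..}" by simp
    show "M \<in> interior {0<..}" using M by (subst interior_open) auto
    show "t \<in> {0<..}" using True by simp
    show "((\<lambda>x. x powr p) has_real_derivative p * M powr (p - 1)) (at M within {0<..})"
      using has_real_derivative_powr[OF M] by (rule has_field_derivative_at_within)
  qed
  then show ?thesis by simp
next
  case False
  then have t0: "t = 0" using t by simp
  have "M powr (p - 1) * M = M powr p" using M powr_mult_base[of M "p - 1"] by (simp add: mult.commute)
  then have "M powr p + p * M powr (p - 1) * (t - M) = (1 - p) * M powr p"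
    using t0 by (simp add: algebra_simps)
  also have "\<dots> \<le> 0" using p by (simp add: mult_nonpos_nonneg)
  finally show ?thesis using t0 p by simp
qed

lemma jensen_set:
  fixes g :: "'a::euclidean_space \<Rightarrow> real" and Q :: "'a set"
  assumes Qs: "Q \<in> sets lebesgue" and Qm: "0 < measure lebesgue Q" and Qf: "emeasure lebesgue Q < \<infinity>"
    and g0: "\<And>x. 0 \<le> g x" and gi: "integrable lebesgue (\<lambda>x. indicator Q x * g x)"
    and gpi: "integrable lebesgue (\<lambda>x. indicator Q x * g x powr p)" and p: "1 \<le> p"
  shows "((\<integral>x. indicator Q x * g x \<partial>lebesgue) / measure lebesgue Q) powr p
           \<le> (\<integral>x. indicator Q x * g x powr p \<partial>lebesgue) / measure lebesgue Q"
proof -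
  define M where "M = (\<integral>x. indicator Q x * g x \<partial>lebesgue) / measure lebesgue Q"
  have M0: "0 \<le> M" unfolding M_def using g0 Qm by (intro divide_nonneg_pos Bochner_Integration.integral_nonneg) auto
  have Qi: "integrable lebesgue (indicator Q :: 'a \<Rightarrow> real)" using Qs Qf by auto
  have intQ: "(\<integral>x. indicator Q x \<partial>lebesgue) = measure lebesgue Q" using Qs by simp
  show ?thesis
  proof (cases "M = 0")
    case True
    have "0 \<le> (\<integral>x. indicator Q x * g x powr p \<partial>lebesgue)" by (intro Bochner_Integration.integral_nonneg) auto
    then show ?thesis using True Qm unfolding M_def[symmetric] using p by simp
  next
    case False
    then have Mp: "M > 0" using M0 by simp
    let ?c = "p * M powr (p - 1)"
    have pt: "indicator Q x * (M powr p + ?c * (g x - M)) \<le> indicator Q x * g x powr p" for x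
      using tangent_powr[OF Mp g0 p] by (auto simp: indicator_def)
    define A0 where "A0 = M powr p - ?c * M"
    have e: "indicator Q x * (M powr p + ?c * (g x - M)) = A0 * indicator Q x + ?c * (indicator Q x * g x)" for x
      unfolding A0_def by (simp add: algebra_simps)
    have "(\<integral>x. A0 * indicator Q x + ?c * (indicator Q x * g x) \<partial>lebesgue)
        = (\<integral>x. A0 * indicator Q x \<partial>lebesgue) + (\<integral>x. ?c * (indicator Q x * g x) \<partial>lebesgue)"
      by (rule Bochner_Integration.integral_add) (use Qi gi in auto)
    also have "\<dots> = A0 * measure lebesgue Q + ?c * (\<integral>x. indicator Q x * g x \<partial>lebesgue)"
      using intQ by simp
    also have "(\<integral>x. indicator Q x * g x \<partial>lebesgue) = M * measure lebesgue Q"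
      unfolding M_def using Qm by simp
    finally have "M powr p * measure lebesgue Q = (\<integral>x. indicator Q x * (M powr p + ?c * (g x - M)) \<partial>lebesgue)"
      unfolding e A0_def by (simp add: algebra_simps)
    also have "\<dots> \<le> (\<integral>x. indicator Q x * g x powr p \<partial>lebesgue)"
    proof (rule integral_mono[OF _ gpi])
      show "integrable lebesgue (\<lambda>x. indicator Q x * (M powr p + ?c * (g x - M)))"
        unfolding e using Qi gi by simp
    qed (use pt in auto)
    finally show ?thesis unfolding M_def[symmetric] using Qm by (simp add: field_simps)
  qed
qed

lemma finite_cells:
  assumes e: "\<epsilon> > 0" and b: "bounded (\<Omega> :: ('n::finite) pt set)"
  shows "finite {k. eps_cell \<epsilon> k \<inter> \<Omega> \<noteq> {}}"
proof -
  obtain R where R: "\<And>x. x \<in> \<Omega> \<Longrightarrow> norm x \<le> R" using b unfolding bounded_iff by blast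
  define S where "S = {\<lfloor>- R / \<epsilon>\<rfloor> - 1 .. \<lceil>R / \<epsilon>\<rceil>}"
  have "{k. eps_cell \<epsilon> k \<inter> \<Omega> \<noteq> {}} \<subseteq> {f. \<forall>x. (x \<in> UNIV \<longrightarrow> f x \<in> S) \<and> (x \<notin> UNIV \<longrightarrow> f x = 0)}"
  proof safe
    fix k x i assume x: "x \<in> eps_cell \<epsilon> k" "x \<in> \<Omega>"
    have xi: "\<bar>x $ i\<bar> \<le> R" using R[OF x(2)] component_le_norm_cart[of x i] by simp
    have "\<epsilon> * of_int (k i) < x $ i" "x $ i < \<epsilon> * (of_int (k i) + 1)" using x by (auto simp: eps_cell_def)
    then have "of_int (k i) < x $ i / \<epsilon>" "x $ i / \<epsilon> < of_int (k i) + 1"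
      using e by (auto simp: field_simps)
    moreover have "x $ i / \<epsilon> \<le> R / \<epsilon>" using divide_right_mono[of "x $ i" R \<epsilon>] xi e by simp
    moreover have "(- R) / \<epsilon> \<le> x $ i / \<epsilon>" using divide_right_mono[of "- R" "x $ i" \<epsilon>] xi e by simp
    ultimately have "of_int (k i) < R / \<epsilon>" "- R / \<epsilon> < of_int (k i) + 1" by linarith+
    then have "k i \<le> \<lceil>R / \<epsilon>\<rceil>" "\<lfloor>- R / \<epsilon>\<rfloor> - 1 \<le> k i"
      by (simp_all add: le_ceiling_iff floor_le_iff) linarith+
    then show "k i \<in> S" unfolding S_def by simp
  qed simp
  moreover have "finite {f. \<forall>x. (x \<in> (UNIV::'n set) \<longrightarrow> f x \<in> S) \<and> (x \<notin> UNIV \<longrightarrow> f x = (0::int))}"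
    by (rule finite_set_of_finite_funs) (auto simp: S_def)
  ultimately show ?thesis by (rule finite_subset)
qed

lemma AE_in_cell:
  assumes e: "\<epsilon> > 0"
  shows "AE x in lebesgue. \<exists>k. (x :: ('n::finite) pt) \<in> eps_cell \<epsilon> k"
proof -
  have hyp: "AE x in lebesgue. (x :: 'n pt) $ i \<noteq> \<epsilon> * of_int m" for i :: 'n and m :: int
  proof -
    have "negligible {x :: 'n pt. axis i 1 \<bullet> x = \<epsilon> * of_int m}"
      by (rule negligible_hyperplane) (simp add: axis_eq_0_iff)
    then have "{x :: 'n pt. axis i 1 \<bullet> x = \<epsilon> * of_int m} \<in> null_sets lebesgue"
      by (simp add: negligible_iff_null_sets)
    from AE_not_in[OF this] show ?thesis by (simp add: inner_axis')
  qed
  have h1: "AE x in lebesgue. \<forall>m::int. (x :: 'n pt) $ i \<noteq> \<epsilon> * of_int m" for i :: 'n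
    by (subst AE_all_countable) (intro allI hyp)
  have "AE x in lebesgue. \<forall>i::'n. \<forall>m::int. (x :: 'n pt) $ i \<noteq> \<epsilon> * of_int m"
    by (subst AE_all_countable) (intro allI h1)
  then show ?thesis
  proof eventually_elim
    case (elim x)
    define k where "k = (\<lambda>i. \<lfloor>x $ i / \<epsilon>\<rfloor>)"
    have "x \<in> eps_cell \<epsilon> k"
      unfolding eps_cell_def
    proof (safe)
      fix i
      have a: "of_int (k i) \<le> x $ i / \<epsilon>" "x $ i / \<epsilon> < of_int (k i) + 1"
        unfolding k_def by linarith+
      then have "\<epsilon> * of_int (k i) \<le> x $ i" "x $ i < \<epsilon> * (of_int (k i) + 1)"
        using e by (auto simp: field_simps)
      moreover have "x $ i \<noteq> \<epsilon> * of_int (k i)" using elim by blast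
      ultimately show "\<epsilon> * of_int (k i) < x $ i" "x $ i < \<epsilon> * (of_int (k i) + 1)" by auto
    qed
    then show ?case by blast
  qed
qed

lemma le_one_plus_powr:
  fixes t p :: real
  assumes t: "0 \<le> t" and p: "1 \<le> p"
  shows "t \<le> 1 + t powr p"
proof (cases "t \<le> 1")
  case True then show ?thesis using powr_ge_zero[of t p] by linarith
next
  case False
  then have "t powr 1 \<le> t powr p" using p by (intro powr_mono) auto
  then show ?thesis using False by simp
qed

lemma avg_bound:
  fixes Du :: "('n::finite) pt \<Rightarrow> 'n pt"
  assumes e: "\<epsilon> > 0" and Q: "eps_cell \<epsilon> k \<subseteq> \<Omega>" and p: "1 \<le> p"
    and Dum: "(\<lambda>x. indicator \<Omega> x *\<^sub>R Du x) \<in> borel_measurable lebesgue"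
    and Dui: "integrable lebesgue (\<lambda>x. indicator \<Omega> x * norm (Du x) powr p)"
  shows "\<epsilon> ^ CARD('n) * norm ((1 / \<epsilon> ^ CARD('n)) *\<^sub>R (LINT y:eps_cell \<epsilon> k|lebesgue. Du y)) powr p
          \<le> (\<integral>x. indicator (eps_cell \<epsilon> k) x * norm (Du x) powr p \<partial>lebesgue)"
proof -
  define Q where "Q = eps_cell \<epsilon> k"
  define g where "g = (\<lambda>x. norm (indicator \<Omega> x *\<^sub>R Du x))"
  have gm: "g \<in> borel_measurable lebesgue" unfolding g_def using Dum by measurable
  have g0: "0 \<le> g x" for x unfolding g_def by simp
  have gQ: "indicator Q x * h (g x) = indicator Q x * h (norm (Du x))" for x and h :: "real \<Rightarrow> real"
    using Q unfolding Q_def g_def by (auto simp: indicator_def)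
  have Qs: "Q \<in> sets lebesgue" unfolding Q_def by simp
  have Qm: "measure lebesgue Q = \<epsilon> ^ CARD('n)" unfolding Q_def by (rule eps_cell_measure[OF e])
  have Qf: "emeasure lebesgue Q < \<infinity>" unfolding Q_def by (subst eps_cell_emeasure[OF e]) simp
  have Qi: "integrable lebesgue (indicator Q :: 'n pt \<Rightarrow> real)" using Qs Qf by auto
  have Qpos: "0 < measure lebesgue Q" using Qm e by simp
  have gpi: "integrable lebesgue (\<lambda>x. indicator Q x * g x powr p)"
  proof (rule Bochner_Integration.integrable_bound[OF Dui])
    show "(\<lambda>x. indicator Q x * g x powr p) \<in> borel_measurable lebesgue" using gm Qs by measurable
    show "AE x in lebesgue. norm (indicator Q x * g x powr p) \<le> norm (indicator \<Omega> x * norm (Du x) powr p)"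
      using Q unfolding Q_def g_def by (intro AE_I2) (auto simp: indicator_def)
  qed
  have gi: "integrable lebesgue (\<lambda>x. indicator Q x * g x)"
  proof (rule Bochner_Integration.integrable_bound[where f = "\<lambda>x. indicator Q x + indicator Q x * g x powr p"])
    show "integrable lebesgue (\<lambda>x. indicator Q x + indicator Q x * g x powr p)" using Qi gpi by auto
    show "(\<lambda>x. indicator Q x * g x) \<in> borel_measurable lebesgue" using gm Qs by measurable
    show "AE x in lebesgue. norm (indicator Q x * g x) \<le> norm (indicator Q x + indicator Q x * g x powr p)"
      using le_one_plus_powr[OF g0 p] g0 by (intro AE_I2) (auto simp: indicator_def)
  qed
  have "norm (LINT y:Q|lebesgue. Du y) = norm (\<integral>y. indicator Q y *\<^sub>R Du y \<partial>lebesgue)"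
    by (simp add: set_lebesgue_integral_def)
  also have "\<dots> \<le> (\<integral>y. norm (indicator Q y *\<^sub>R Du y) \<partial>lebesgue)" by (rule integral_norm_bound)
  also have "(\<integral>y. norm (indicator Q y *\<^sub>R Du y) \<partial>lebesgue) = (\<integral>y. indicator Q y * g y \<partial>lebesgue)"
    using gQ[where h="\<lambda>t. t"] by (intro Bochner_Integration.integral_cong) (auto simp: indicator_def)
  finally have n1: "norm (LINT y:Q|lebesgue. Du y) \<le> (\<integral>y. indicator Q y * g y \<partial>lebesgue)" .
  have "norm ((1 / \<epsilon> ^ CARD('n)) *\<^sub>R (LINT y:Q|lebesgue. Du y)) = norm (LINT y:Q|lebesgue. Du y) / measure lebesgue Q"
    using e Qm by simp
  also have "\<dots> \<le> (\<integral>y. indicator Q y * g y \<partial>lebesgue) / measure lebesgue Q"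
    using n1 Qpos by (simp add: divide_right_mono)
  finally have n2: "norm ((1 / \<epsilon> ^ CARD('n)) *\<^sub>R (LINT y:Q|lebesgue. Du y)) \<le> (\<integral>y. indicator Q y * g y \<partial>lebesgue) / measure lebesgue Q" .
  have "norm ((1 / \<epsilon> ^ CARD('n)) *\<^sub>R (LINT y:Q|lebesgue. Du y)) powr p \<le> ((\<integral>y. indicator Q y * g y \<partial>lebesgue) / measure lebesgue Q) powr p"
    using n2 p by (intro powr_mono2) auto
  also have "\<dots> \<le> (\<integral>x. indicator Q x * g x powr p \<partial>lebesgue) / measure lebesgue Q"
    by (rule jensen_set[OF Qs Qpos Qf g0 gi gpi p])
  finally have "measure lebesgue Q * norm ((1 / \<epsilon> ^ CARD('n)) *\<^sub>R (LINT y:Q|lebesgue. Du y)) powr p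
      \<le> (\<integral>x. indicator Q x * g x powr p \<partial>lebesgue)"
    using Qpos by (simp add: field_simps)
  moreover have "(\<integral>x. indicator Q x * g x powr p \<partial>lebesgue) = (\<integral>x. indicator Q x * norm (Du x) powr p \<partial>lebesgue)"
    by (intro Bochner_Integration.integral_cong refl) (rule gQ)
  ultimately show ?thesis using Qm unfolding Q_def by simp
qed

lemma cells_sum:
  fixes f :: "('n::finite) pt \<Rightarrow> real"
  assumes e: "\<epsilon> > 0" and K: "finite K" "\<And>k. k \<in> K \<Longrightarrow> eps_cell \<epsilon> k \<subseteq> \<Omega>"
    and f0: "\<And>x. 0 \<le> f x" and fi: "integrable lebesgue (\<lambda>x. indicator \<Omega> x * f x)"
  shows "(\<Sum>k\<in>K. \<integral>x. indicator (eps_cell \<epsilon> k) x * f x \<partial>lebesgue) \<le> (\<integral>x. indicator \<Omega> x * f x \<partial>lebesgue)"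
proof -
  have eq: "indicator (eps_cell \<epsilon> k) x * f x = indicator (eps_cell \<epsilon> k) x * (indicator \<Omega> x * f x)" if "k \<in> K" for k x
    using K(2)[OF that] by (auto simp: indicator_def)
  have ik: "integrable lebesgue (\<lambda>x. indicator (eps_cell \<epsilon> k) x * f x)" if "k \<in> K" for k
  proof -
    have "integrable lebesgue (\<lambda>x. indicator (eps_cell \<epsilon> k) x * (indicator \<Omega> x * f x))"
      using integrable_real_mult_indicator[OF eps_cell_sets fi] by (simp add: mult.commute)
    moreover have "(\<lambda>x. indicator (eps_cell \<epsilon> k) x * (indicator \<Omega> x * f x)) = (\<lambda>x. indicator (eps_cell \<epsilon> k) x * f x)"
      by (rule ext) (rule eq[OF that, symmetric])
    ultimately show ?thesis by simp
  qed
  have "(\<Sum>k\<in>K. \<integral>x. indicator (eps_cell \<epsilon> k) x * f x \<partial>lebesgue) = (\<integral>x. (\<Sum>k\<in>K. indicator (eps_cell \<epsilon> k) x * f x) \<partial>lebesgue)"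
    by (rule Bochner_Integration.integral_sum[symmetric]) (rule ik)
  also have "\<dots> \<le> (\<integral>x. indicator \<Omega> x * f x \<partial>lebesgue)"
  proof (rule integral_mono[OF _ fi])
    show "integrable lebesgue (\<lambda>x. \<Sum>k\<in>K. indicator (eps_cell \<epsilon> k) x * f x)" using ik by auto
    fix x
    show "(\<Sum>k\<in>K. indicator (eps_cell \<epsilon> k) x * f x) \<le> indicator \<Omega> x * f x"
    proof (cases "\<exists>k\<in>K. x \<in> eps_cell \<epsilon> k")
      case True
      then obtain k0 where k0: "k0 \<in> K" "x \<in> eps_cell \<epsilon> k0" by blast
      have "indicator (eps_cell \<epsilon> k) x * f x = (if k = k0 then f x else 0)" for k
      proof (cases "x \<in> eps_cell \<epsilon> k")
        case True
        then have "k = k0" using eps_cell_disj[OF e True k0(2)] by simp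
        then show ?thesis using True by simp
      next
        case False
        then have "k \<noteq> k0" using k0(2) by blast
        then show ?thesis using False by simp
      qed
      then have "(\<Sum>k\<in>K. indicator (eps_cell \<epsilon> k) x * f x) = (\<Sum>k\<in>K. if k = k0 then f x else 0)"
        by simp
      also have "\<dots> = f x" using k0(1) K(1) by simp
      finally have s: "(\<Sum>k\<in>K. indicator (eps_cell \<epsilon> k) x * f x) = f x" .
      have "x \<in> \<Omega>" using K(2)[OF k0(1)] k0(2) by blast
      then show ?thesis using s by simp
    next
      case False
      then have "(\<Sum>k\<in>K. indicator (eps_cell \<epsilon> k) x * f x) = 0" by (intro sum.neutral) auto
      then show ?thesis using f0[of x] by (simp add: indicator_def)
    qed
  qed
  finally show ?thesis .
qed

theorem mainTheorem8:
  fixes \<Omega> E :: "('n::finite) pt set"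
    and s1 s2 p1 p2 :: real
    and v :: "'n pt \<Rightarrow> 'n pt \<Rightarrow> real" and Dv :: "'n pt \<Rightarrow> 'n pt \<Rightarrow> 'n pt"
    and f :: "('n pt \<Rightarrow> real) \<Rightarrow> real"
    and u :: "'n pt \<Rightarrow> real" and Du :: "'n pt \<Rightarrow> 'n pt"
  assumes \<Omega>: "open \<Omega>" "bounded \<Omega>"
    and sig: "0 < s1" "0 < s2"
    and pexps: "(1 < p1 \<and> p1 \<le> p2 \<and> p2 \<le> 2) \<or> (1 < p1 \<and> p1 \<le> 2 \<and> 2 \<le> p2)"
    and micro: "dispersed E \<or> layered E"
    and cell: "cell_solutions E s1 s2 p1 p2 v Dv"
    and f_lin: "\<And>\<phi> g \<psi> h c. W1p0 p1 \<Omega> \<phi> g \<Longrightarrow> W1p0 p1 \<Omega> \<psi> h \<Longrightarrow>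
                  f (\<lambda>x. \<phi> x + \<psi> x) = f \<phi> + f \<psi> \<and> f (\<lambda>x. c * \<phi> x) = c * f \<phi>"
    and f_bdd: "\<exists>C. \<forall>\<phi> g. W1p0 p1 \<Omega> \<phi> g \<longrightarrow> \<bar>f \<phi>\<bar> \<le> C * W1p_norm p1 \<Omega> \<phi> g"
    and u_W0: "W1p0 p1 \<Omega> u Du"
    and u_sol: "\<And>\<phi>. test_fun \<Omega> \<phi> \<Longrightarrow>
                  (LINT x:\<Omega>|lebesgue. bhom E s1 s2 p1 p2 Dv (Du x) \<bullet> grad \<phi> x) = f \<phi>"
    and u_reg: "W1p0 p2 \<Omega> u Du"
  shows "(\<exists>C::real. \<forall>\<epsilon>>0.
           (\<integral>\<^sup>+ x\<in>\<Omega>. ennreal (indicator E ((1/\<epsilon>) *\<^sub>R x) *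
               norm (Mavg \<Omega> \<epsilon> Du x + Dv (Mavg \<Omega> \<epsilon> Du x) ((1/\<epsilon>) *\<^sub>R x)) powr p1) \<partial>lebesgue)
             \<le> ennreal C) \<and>
         (\<exists>C::real. \<forall>\<epsilon>>0.
           (\<integral>\<^sup>+ x\<in>\<Omega>. ennreal ((1 - indicator E ((1/\<epsilon>) *\<^sub>R x)) *
               norm (Mavg \<Omega> \<epsilon> Du x + Dv (Mavg \<Omega> \<epsilon> Du x) ((1/\<epsilon>) *\<^sub>R x)) powr p2) \<partial>lebesgue)
             \<le> ennreal C)"
proof -
  have p1: "1 < p1" and p12: "p1 \<le> p2" using pexps by auto
  have \<Omega>s[measurable]: "\<Omega> \<in> sets lebesgue" using \<Omega>(1) by simp
  have Lp1: "Lp p1 \<Omega> Du" using u_W0 unfolding W1p0_def W1p_def by blast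
  have Lp2: "Lp p2 \<Omega> Du" using u_reg unfolding W1p0_def W1p_def by blast
  have Dum: "(\<lambda>x. indicator \<Omega> x *\<^sub>R Du x) \<in> borel_measurable lebesgue"
    using Lp1 unfolding Lp_def set_borel_measurable_def by blast
  have Dui1: "integrable lebesgue (\<lambda>x. indicator \<Omega> x * norm (Du x) powr p1)"
    using Lp1 unfolding Lp_def set_integrable_def by simp
  have Dui2: "integrable lebesgue (\<lambda>x. indicator \<Omega> x * norm (Du x) powr p2)"
    using Lp2 unfolding Lp_def set_integrable_def by simp
  define B where "B = (\<integral>x. indicator \<Omega> x * norm (Du x) powr p1 \<partial>lebesgue) + (\<integral>x. indicator \<Omega> x * norm (Du x) powr p2 \<partial>lebesgue)"
  define C where "C = Kc s1 s2 p2 * B"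
  have Kc0: "0 \<le> Kc s1 s2 p2" using sig by (simp add: Kc_def)
  let ?Pn = "\<lambda>\<epsilon> (\<xi>::'n pt) x. norm (\<xi> + Dv \<xi> ((1/\<epsilon>) *\<^sub>R x)) powr pexp E p1 p2 ((1/\<epsilon>) *\<^sub>R x)"
  have key: "(\<integral>\<^sup>+ x. ennreal (?Pn \<epsilon> (Mavg \<Omega> \<epsilon> Du x) x) * indicator \<Omega> x \<partial>lebesgue) \<le> ennreal C"
    if e: "\<epsilon> > 0" for \<epsilon>
  proof -
    define Kall where "Kall = {k. eps_cell \<epsilon> k \<inter> \<Omega> \<noteq> {}}"
    have Kf: "finite Kall" unfolding Kall_def by (rule finite_cells[OF e \<Omega>(2)])
    define Kin where "Kin = {k \<in> Kall. eps_cell \<epsilon> k \<subseteq> \<Omega>}"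
    have Kinf: "finite Kin" using Kf unfolding Kin_def by simp
    define avg where "avg = (\<lambda>k. (1 / \<epsilon> ^ CARD('n)) *\<^sub>R (LINT y:eps_cell \<epsilon> k|lebesgue. Du y))"
    define xi where "xi = (\<lambda>k. if eps_cell \<epsilon> k \<subseteq> \<Omega> then avg k else 0)"
    have Mk: "Mavg \<Omega> \<epsilon> Du x = xi k" if x: "x \<in> eps_cell \<epsilon> k" for x k
    proof (cases "eps_cell \<epsilon> k \<subseteq> \<Omega>")
      case True
      then have ex: "\<exists>k. eps_cell \<epsilon> k \<subseteq> \<Omega> \<and> x \<in> eps_cell \<epsilon> k" using x by blast
      define k' where "k' = (SOME k. eps_cell \<epsilon> k \<subseteq> \<Omega> \<and> x \<in> eps_cell \<epsilon> k)"
      have "eps_cell \<epsilon> k' \<subseteq> \<Omega> \<and> x \<in> eps_cell \<epsilon> k'" unfolding k'_def by (rule someI_ex[OF ex])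
      then have "k' = k" using eps_cell_disj[OF e _ x] by blast
      then show ?thesis using ex True unfolding Mavg_def xi_def avg_def k'_def[symmetric] by (simp add: Let_def)
    next
      case False
      have nex: "\<not> (\<exists>k. eps_cell \<epsilon> k \<subseteq> \<Omega> \<and> x \<in> eps_cell \<epsilon> k)"
      proof
        assume "\<exists>k. eps_cell \<epsilon> k \<subseteq> \<Omega> \<and> x \<in> eps_cell \<epsilon> k"
        then obtain k' where "eps_cell \<epsilon> k' \<subseteq> \<Omega>" "x \<in> eps_cell \<epsilon> k'" by blast
        with eps_cell_disj[OF e _ x] False show False by blast
      qed
      have "Mavg \<Omega> \<epsilon> Du x = 0" unfolding Mavg_def by (rule if_not_P[OF nex])
      then show ?thesis using False unfolding xi_def by simp
    qed
    define T where "T = (\<lambda>k x. ennreal (indicator (eps_cell \<epsilon> k) x * ?Pn \<epsilon> (xi k) x))"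
    have Tm: "T k \<in> borel_measurable lebesgue" for k
      unfolding T_def by (rule cell_bound(2)[OF e sig p1 p12 micro cell])
    have Tb: "integral\<^sup>N lebesgue (T k) \<le> ennreal (\<epsilon> ^ CARD('n) * (Kc s1 s2 p2 * Nf (xi k) p1 p2))" for k
      unfolding T_def by (rule cell_bound(1)[OF e sig p1 p12 micro cell])
    have AEb: "AE x in lebesgue. ennreal (?Pn \<epsilon> (Mavg \<Omega> \<epsilon> Du x) x) * indicator \<Omega> x \<le> (\<Sum>k\<in>Kall. T k x)"
      using AE_in_cell[OF e]
    proof eventually_elim
      case (elim x)
      then obtain k where k: "x \<in> eps_cell \<epsilon> k" by blast
      show ?case
      proof (cases "x \<in> \<Omega>")
        case False then show ?thesis by simp
      next
        case True
        then have kK: "k \<in> Kall" using k unfolding Kall_def by blast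
        have "ennreal (?Pn \<epsilon> (Mavg \<Omega> \<epsilon> Du x) x) * indicator \<Omega> x = T k x"
          using True k Mk[OF k] unfolding T_def by simp
        also have "\<dots> \<le> (\<Sum>k\<in>Kall. T k x)" by (rule member_le_sum[OF kK _ Kf]) simp
        finally show ?thesis .
      qed
    qed
    have "(\<integral>\<^sup>+ x. ennreal (?Pn \<epsilon> (Mavg \<Omega> \<epsilon> Du x) x) * indicator \<Omega> x \<partial>lebesgue) \<le> (\<integral>\<^sup>+ x. (\<Sum>k\<in>Kall. T k x) \<partial>lebesgue)"
      by (rule nn_integral_mono_AE[OF AEb])
    also have "\<dots> = (\<Sum>k\<in>Kall. integral\<^sup>N lebesgue (T k))"
      by (rule nn_integral_sum) (rule Tm)
    also have "\<dots> \<le> (\<Sum>k\<in>Kall. ennreal (\<epsilon> ^ CARD('n) * (Kc s1 s2 p2 * Nf (xi k) p1 p2)))"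
      by (intro sum_mono Tb)
    also have "\<dots> = ennreal (\<Sum>k\<in>Kall. \<epsilon> ^ CARD('n) * (Kc s1 s2 p2 * Nf (xi k) p1 p2))"
      using e Kc0 by (intro sum_ennreal) (auto simp: Nf_def)
    also have "(\<Sum>k\<in>Kall. \<epsilon> ^ CARD('n) * (Kc s1 s2 p2 * Nf (xi k) p1 p2)) \<le> C"
    proof -
      have "(\<Sum>k\<in>Kall. \<epsilon> ^ CARD('n) * (Kc s1 s2 p2 * Nf (xi k) p1 p2))
          = Kc s1 s2 p2 * (\<Sum>k\<in>Kall. if eps_cell \<epsilon> k \<subseteq> \<Omega> then \<epsilon> ^ CARD('n) * Nf (avg k) p1 p2 else 0)"
        unfolding sum_distrib_left
        using p1 p12 by (intro sum.cong refl) (auto simp: xi_def Nf_def)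
      also have "(\<Sum>k\<in>Kall. if eps_cell \<epsilon> k \<subseteq> \<Omega> then \<epsilon> ^ CARD('n) * Nf (avg k) p1 p2 else 0)
          = (\<Sum>k\<in>Kin. \<epsilon> ^ CARD('n) * Nf (avg k) p1 p2)"
        unfolding Kin_def by (rule sum.inter_filter[OF Kf, symmetric])
      also have "\<dots> = (\<Sum>k\<in>Kin. \<epsilon> ^ CARD('n) * norm (avg k) powr p1) + (\<Sum>k\<in>Kin. \<epsilon> ^ CARD('n) * norm (avg k) powr p2)"
        by (simp add: Nf_def distrib_left sum.distrib)
      also have "\<dots> \<le> (\<Sum>k\<in>Kin. \<integral>x. indicator (eps_cell \<epsilon> k) x * norm (Du x) powr p1 \<partial>lebesgue)
                   + (\<Sum>k\<in>Kin. \<integral>x. indicator (eps_cell \<epsilon> k) x * norm (Du x) powr p2 \<partial>lebesgue)"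
      proof (intro add_mono sum_mono)
        fix k assume "k \<in> Kin"
        then have kQ: "eps_cell \<epsilon> k \<subseteq> \<Omega>" unfolding Kin_def by blast
        show "\<epsilon> ^ CARD('n) * norm (avg k) powr p1 \<le> (\<integral>x. indicator (eps_cell \<epsilon> k) x * norm (Du x) powr p1 \<partial>lebesgue)"
          unfolding avg_def by (rule avg_bound[OF e kQ _ Dum Dui1]) (use p1 in simp)
        show "\<epsilon> ^ CARD('n) * norm (avg k) powr p2 \<le> (\<integral>x. indicator (eps_cell \<epsilon> k) x * norm (Du x) powr p2 \<partial>lebesgue)"
          unfolding avg_def by (rule avg_bound[OF e kQ _ Dum Dui2]) (use p1 p12 in simp)
      qed
      also have "\<dots> \<le> B" unfolding B_def
        by (intro add_mono cells_sum[OF e Kinf] Dui1 Dui2) (auto simp: Kin_def)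
      finally show ?thesis unfolding C_def using Kc0 by (simp add: mult_left_mono)
    qed
    finally show ?thesis by (simp add: ennreal_leI)
  qed
  show ?thesis
  proof (intro conjI exI allI impI)
    fix \<epsilon> :: real assume e: "\<epsilon> > 0"
    show "(\<integral>\<^sup>+ x\<in>\<Omega>. ennreal (indicator E ((1/\<epsilon>) *\<^sub>R x) *
               norm (Mavg \<Omega> \<epsilon> Du x + Dv (Mavg \<Omega> \<epsilon> Du x) ((1/\<epsilon>) *\<^sub>R x)) powr p1) \<partial>lebesgue) \<le> ennreal C"
    proof (rule order_trans[OF nn_integral_mono key[OF e]])
      fix x
      show "ennreal (indicator E ((1/\<epsilon>) *\<^sub>R x) * norm (Mavg \<Omega> \<epsilon> Du x + Dv (Mavg \<Omega> \<epsilon> Du x) ((1/\<epsilon>) *\<^sub>R x)) powr p1) * indicator \<Omega> x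
          \<le> ennreal (?Pn \<epsilon> (Mavg \<Omega> \<epsilon> Du x) x) * indicator \<Omega> x"
        by (cases "(1/\<epsilon>) *\<^sub>R x \<in> E") (auto simp: pexp_def intro!: mult_right_mono)
    qed
    show "(\<integral>\<^sup>+ x\<in>\<Omega>. ennreal ((1 - indicator E ((1/\<epsilon>) *\<^sub>R x)) *
               norm (Mavg \<Omega> \<epsilon> Du x + Dv (Mavg \<Omega> \<epsilon> Du x) ((1/\<epsilon>) *\<^sub>R x)) powr p2) \<partial>lebesgue) \<le> ennreal C"
    proof (rule order_trans[OF nn_integral_mono key[OF e]])
      fix x
      show "ennreal ((1 - indicator E ((1/\<epsilon>) *\<^sub>R x)) * norm (Mavg \<Omega> \<epsilon> Du x + Dv (Mavg \<Omega> \<epsilon> Du x) ((1/\<epsilon>) *\<^sub>R x)) powr p2) * indicator \<Omega> x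
          \<le> ennreal (?Pn \<epsilon> (Mavg \<Omega> \<epsilon> Du x) x) * indicator \<Omega> x"
        by (cases "(1/\<epsilon>) *\<^sub>R x \<in> E") (auto simp: pexp_def intro!: mult_right_mono)
    qed
  qed
qed

end
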